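(* Let $B$ be a cubic 3-connected graph and, for each $u\in V(B)$, let $A^u$ be a cubic 3-connected graph with a vertex $a^u$, all disjoint, and let $G=B\{(A^u,a^u):u\in V(B)\}$ (for any choice of the bijections in the construction). Suppose that (h0) $v(B)\equiv 0\pmod 6$ and $v(A^u)\equiv 2\pmod 6$ for every $u$ (so $v(G)\equiv 0\pmod 6$); (h1) for every $u$ and every vertex $x$ of $A^u-(N(a^u)\cup\{a^u\})$ adjacent to a vertex of $N(a^u)$, the graph $A^u-(N(a^u)\cup\{a^u,x\})$ has no $\Lambda$-factor; (h2) for every $u$ and every edge $a^uz\in E(A^u)$, $A^u-\{a^u,z\}$ has a $\Lambda$-factor; (h3) for every $u$ and every 5-vertex path $W$ in $A^u$ with center vertex $a^u$, $A^u-W$ has a $\Lambda$-factor. Then: (a1) if $P$ is a $\Lambda$-factor of $G$, then $\alpha^{-1}(E(P)\cap E'(G))$ is the edge set of a $\Lambda$-factor $Q$ of $B$, and $\vec F(P,G)=\vec Q$; (a2) if $P$ is a $\Lambda$-factor of $G$ and $B$ and all $A^u$ have no 3-blockades, then $|K\cap E(P)|\in\{1,2\}$ for every 3-blockade $K$ of $G$; (a3) for every $\Lambda$-difactor $\vec Q$ of $B$ there is a $\Lambda$-factor $P$ of $G$ with $\vec F(P,G)=\vec Q$.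
   Context: Graphs are finite and simple. A $\Lambda$-factor of a graph is a spanning subgraph each of whose components is a 3-vertex path; for a subgraph $H$, $G-H$ deletes the vertices of $H$. Graph-composition $G=B\{(A^u,a^u):u\in V(B)\}$: $B$ is cubic, each $a^u$ has degree 3 in $A^u$, $A_u=A^u-a^u$; fix for each $u$ a bijection between $N(a^u,A^u)$ and the three edges of $B$ at $u$; $G$ is the disjoint union of all $A_u$ together with, for each $uv\in E(B)$, one edge $\alpha(uv)$ joining the neighbour of $a^u$ corresponding to $uv$ with the neighbour of $a^v$ corresponding to $uv$. $E'(G)=\{\alpha(e):e\in E(B)\}$. For a $\Lambda$-factor $P$ of $G$, $\vec F(P,G)$ is the directed subgraph of $B$ consisting of edges $uv$ with $\alpha(uv)\in E(P)$, directed from $u$ to $v$ if the component $L$ of $P$ containing $\alpha(uv)$ satisfies $|V(L)\cap V(A_u)|=1$. For a $\Lambda$-factor $Q$ of $B$, the $\Lambda$-difactor $\vec Q$ is obtained by directing both edges of each path of $Q$ towards its center. A blockade of a cubic graph is an edge cut that is a matching; a 3-blockade is one with 3 edges. *)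

theory Defs
  imports Main
begin

type_synonym 'a graph = "'a set \<times> 'a set set"

definition verts :: "'a graph \<Rightarrow> 'a set" where "verts G = fst G"
definition edges :: "'a graph \<Rightarrow> 'a set set" where "edges G = snd G"

definition graph :: "'a graph \<Rightarrow> bool" where
  "graph G \<longleftrightarrow> finite (verts G) \<and>
     (\<forall>e\<in>edges G. \<exists>x y. x \<noteq> y \<and> x \<in> verts G \<and> y \<in> verts G \<and> e = {x, y})"

definition nbrs :: "'a graph \<Rightarrow> 'a \<Rightarrow> 'a set" where
  "nbrs G v = {w. {v, w} \<in> edges G}"

definition degree :: "'a graph \<Rightarrow> 'a \<Rightarrow> nat" where
  "degree G v = card {e \<in> edges G. v \<in> e}"

definition cubic :: "'a graph \<Rightarrow> bool" where
  "cubic G \<longleftrightarrow> graph G \<and> (\<forall>v\<in>verts G. degree G v = 3)"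

definition delete :: "'a graph \<Rightarrow> 'a set \<Rightarrow> 'a graph" where
  "delete G S = (verts G - S, {e \<in> edges G. e \<inter> S = {}})"

definition reach :: "'a graph \<Rightarrow> 'a \<Rightarrow> 'a \<Rightarrow> bool" where
  "reach G = (\<lambda>x y. {x, y} \<in> edges G)\<^sup>*\<^sup>*"

definition connected :: "'a graph \<Rightarrow> bool" where
  "connected G \<longleftrightarrow> verts G \<noteq> {} \<and> (\<forall>x\<in>verts G. \<forall>y\<in>verts G. reach G x y)"

definition three_connected :: "'a graph \<Rightarrow> bool" where
  "three_connected G \<longleftrightarrow> graph G \<and> card (verts G) \<ge> 4 \<and>
     (\<forall>S. S \<subseteq> verts G \<and> card S \<le> 2 \<longrightarrow> connected (delete G S))"

definition component :: "'a graph \<Rightarrow> 'a \<Rightarrow> 'a graph" where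
  "component G v = ({w. reach G v w}, {e \<in> edges G. e \<subseteq> {w. reach G v w}})"

definition is_P3 :: "'a graph \<Rightarrow> bool" where
  "is_P3 H \<longleftrightarrow> (\<exists>x y z. x \<noteq> y \<and> y \<noteq> z \<and> x \<noteq> z \<and>
      verts H = {x, y, z} \<and> edges H = {{x, y}, {y, z}})"

definition lambda_factor :: "'a graph \<Rightarrow> 'a graph \<Rightarrow> bool" where
  "lambda_factor G P \<longleftrightarrow> verts P = verts G \<and> edges P \<subseteq> edges G \<and>
     (\<forall>v\<in>verts P. is_P3 (component P v))"

definition has_lambda_factor :: "'a graph \<Rightarrow> bool" where
  "has_lambda_factor G \<longleftrightarrow> (\<exists>P. lambda_factor G P)"

text \<open>Lambda-difactor of a Lambda-factor Q: each edge directed towards the center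
  (the vertex of degree 2 in its path). Arcs are pairs (tail, head).\<close>
definition difactor :: "'a graph \<Rightarrow> ('a \<times> 'a) set" where
  "difactor Q = {(x, y). {x, y} \<in> edges Q \<and> degree Q y = 2}"

text \<open>B has vertices of type 'b; each A u has vertices of type 'a;
  the copies A_u = A u - a u are made disjoint by tagging with u.
  phi u is the bijection from the edges of B at u to the neighbours of a u in A u.\<close>
definition alpha :: "('b \<Rightarrow> 'b set \<Rightarrow> 'a) \<Rightarrow> 'b \<Rightarrow> 'b \<Rightarrow> ('b \<times> 'a) set" where
  "alpha phi u v = {(u, phi u {u, v}), (v, phi v {u, v})}"

definition VA :: "('b \<Rightarrow> 'a graph) \<Rightarrow> ('b \<Rightarrow> 'a) \<Rightarrow> 'b \<Rightarrow> ('b \<times> 'a) set" where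
  "VA A a u = {u} \<times> (verts (A u) - {a u})"

definition compose ::
  "'b graph \<Rightarrow> ('b \<Rightarrow> 'a graph) \<Rightarrow> ('b \<Rightarrow> 'a) \<Rightarrow> ('b \<Rightarrow> 'b set \<Rightarrow> 'a) \<Rightarrow> ('b \<times> 'a) graph" where
  "compose B A a phi =
     ((\<Union>u\<in>verts B. VA A a u),
      {{(u, x), (u, y)} | u x y. u \<in> verts B \<and> {x, y} \<in> edges (delete (A u) {a u})}
      \<union> {alpha phi u v | u v. {u, v} \<in> edges B})"

definition Eprime :: "'b graph \<Rightarrow> ('b \<Rightarrow> 'b set \<Rightarrow> 'a) \<Rightarrow> ('b \<times> 'a) set set" where
  "Eprime B phi = {alpha phi u v | u v. {u, v} \<in> edges B}"

definition alpha_preimage ::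
  "'b graph \<Rightarrow> ('b \<Rightarrow> 'b set \<Rightarrow> 'a) \<Rightarrow> ('b \<times> 'a) graph \<Rightarrow> 'b set set" where
  "alpha_preimage B phi P =
     {e \<in> edges B. \<exists>u v. e = {u, v} \<and> alpha phi u v \<in> edges P \<inter> Eprime B phi}"

definition Fvec ::
  "'b graph \<Rightarrow> ('b \<Rightarrow> 'a graph) \<Rightarrow> ('b \<Rightarrow> 'a) \<Rightarrow> ('b \<Rightarrow> 'b set \<Rightarrow> 'a) \<Rightarrow> ('b \<times> 'a) graph
     \<Rightarrow> ('b \<times> 'b) set" where
  "Fvec B A a phi P = {(u, v). {u, v} \<in> edges B \<and> alpha phi u v \<in> edges P \<and>
     card (verts (component P (u, phi u {u, v})) \<inter> VA A a u) = 1}"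

definition edge_cut :: "'a graph \<Rightarrow> 'a set set \<Rightarrow> bool" where
  "edge_cut G K \<longleftrightarrow> (\<exists>X. X \<subseteq> verts G \<and> X \<noteq> {} \<and> X \<noteq> verts G \<and>
     K = {e \<in> edges G. \<exists>x\<in>X. \<exists>y\<in>verts G - X. e = {x, y}})"

definition matching :: "'a set set \<Rightarrow> bool" where
  "matching K \<longleftrightarrow> (\<forall>e\<in>K. \<forall>f\<in>K. e \<noteq> f \<longrightarrow> e \<inter> f = {})"

definition three_blockade :: "'a graph \<Rightarrow> 'a set set \<Rightarrow> bool" where
  "three_blockade G K \<longleftrightarrow> edge_cut G K \<and> matching K \<and> card K = 3"

end

theory Submission
  imports Defs
begin

definition cut :: "'a graph \<Rightarrow> 'a set \<Rightarrow> 'a set set" where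
  "cut H U = {e \<in> edges H. \<exists>x\<in>U. \<exists>y\<in>verts H - U. e = {x, y}}"
definition star :: "'a graph \<Rightarrow> 'a \<Rightarrow> 'a set set" where
  "star H w = {e \<in> edges H. w \<in> e}"
definition sgraph :: "'a graph \<Rightarrow> bool" where
  "sgraph H \<longleftrightarrow> (\<forall>e\<in>edges H. \<exists>x y. x \<noteq> y \<and> x \<in> verts H \<and> y \<in> verts H \<and> e = {x, y})"
definition loc :: "'a graph \<Rightarrow> bool" where
  "loc P \<longleftrightarrow> (\<forall>v\<in>verts P. card (nbrs P v) = 1 \<or> card (nbrs P v) = 2) \<and>
     (\<forall>v w. {v, w} \<in> edges P \<longrightarrow> (card (nbrs P v) = 2) = (card (nbrs P w) \<noteq> 2))"

lemma graph_sgraph: "graph H \<Longrightarrow> sgraph H"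
  by (simp add: graph_def sgraph_def)

lemma sgraph_edge: "sgraph H \<Longrightarrow> {x, y} \<in> edges H \<Longrightarrow> x \<noteq> y \<and> x \<in> verts H \<and> y \<in> verts H"
  unfolding sgraph_def by (metis doubleton_eq_iff)

lemma sgraph_edgeE:
  assumes "sgraph H" "e \<in> edges H"
  obtains x y where "x \<noteq> y" "x \<in> verts H" "y \<in> verts H" "e = {x, y}"
  using assms unfolding sgraph_def by metis

lemma finite_edges: "graph H \<Longrightarrow> finite (edges H)"
proof -
  assume g: "graph H"
  have "edges H \<subseteq> Pow (verts H)"
  proof
    fix e assume e: "e \<in> edges H"
    obtain x y where "x \<in> verts H" "y \<in> verts H" "e = {x, y}"
      using sgraph_edgeE[OF graph_sgraph[OF g] e] by metis
    then show "e \<in> Pow (verts H)" by auto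
  qed
  moreover have "finite (Pow (verts H))" using g unfolding graph_def by simp
  ultimately show ?thesis by (rule finite_subset)
qed

lemma nbrs_sub: "sgraph H \<Longrightarrow> nbrs H v \<subseteq> verts H"
  unfolding nbrs_def using sgraph_edge by fastforce

lemma nbrs_sym: "w \<in> nbrs H v \<longleftrightarrow> v \<in> nbrs H w"
  unfolding nbrs_def by (simp add: insert_commute)

lemma nbrs_irrefl: "sgraph H \<Longrightarrow> v \<notin> nbrs H v"
  unfolding nbrs_def using sgraph_edge by fastforce

lemma star_nbrs: "sgraph H \<Longrightarrow> star H v = (\<lambda>w. {v, w}) ` nbrs H v"
  unfolding star_def nbrs_def
proof (rule set_eqI, rule iffI)
  fix e assume s: "sgraph H" and "e \<in> {e \<in> edges H. v \<in> e}"
  then have e: "e \<in> edges H" "v \<in> e" by auto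
  obtain x y where "e = {x, y}" using sgraph_edgeE[OF s e(1)] by metis
  then have "e = {v, if x = v then y else x}" using e(2) by auto
  then show "e \<in> (\<lambda>w. {v, w}) ` {w. {v, w} \<in> edges H}" using e(1) by auto
qed auto

lemma degree_nbrs: "sgraph H \<Longrightarrow> degree H v = card (nbrs H v)"
proof -
  assume s: "sgraph H"
  have "inj_on (\<lambda>w. {v, w}) (nbrs H v)"
    by (rule inj_onI) (metis doubleton_eq_iff)
  then show ?thesis using star_nbrs[OF s, of v] card_image
    unfolding degree_def star_def by metis
qed

lemma reach_sym: "reach H x y \<Longrightarrow> reach H y x"
proof -
  have "symp (\<lambda>x y. {x, y} \<in> edges H)" by (rule sympI) (simp add: insert_commute)
  then show "reach H x y \<Longrightarrow> reach H y x" unfolding reach_def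
    by (meson sympD symp_rtranclp)
qed

lemma reach_edge: "{x, y} \<in> edges H \<Longrightarrow> reach H x y"
  unfolding reach_def by auto

lemma reach_trans: "reach H x y \<Longrightarrow> reach H y z \<Longrightarrow> reach H x z"
  unfolding reach_def by auto

lemma reach_closed:
  assumes "reach H v w" "v \<in> S" "\<And>x y. x \<in> S \<Longrightarrow> {x, y} \<in> edges H \<Longrightarrow> y \<in> S"
  shows "w \<in> S"
  using assms(1) unfolding reach_def
  by (induction rule: rtranclp_induct) (use assms in auto)

lemma comp_center:
  assumes s: "sgraph P" and l: "loc P" and c: "card (nbrs P c) = 2"
  shows "verts (component P c) = insert c (nbrs P c)"
proof -
  have "{w. reach P c w} = insert c (nbrs P c)"
  proof (rule set_eqI, rule iffI)
    fix w assume "w \<in> {w. reach P c w}"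
    then have r: "reach P c w" by simp
    show "w \<in> insert c (nbrs P c)"
    proof (rule reach_closed[OF r])
      fix x y assume x: "x \<in> insert c (nbrs P c)" and e: "{x, y} \<in> edges P"
      show "y \<in> insert c (nbrs P c)"
      proof (cases "x = c")
        case True then show ?thesis using e by (simp add: nbrs_def)
      next
        case False
        then have xn: "x \<in> nbrs P c" using x by simp
        then have ce: "{c, x} \<in> edges P" by (simp add: nbrs_def)
        have xv: "x \<in> verts P" using sgraph_edge[OF s ce] by simp
        have "card (nbrs P x) \<noteq> 2" using l ce c unfolding loc_def by blast
        then have "card (nbrs P x) = 1" using l xv unfolding loc_def by blast
        moreover have "c \<in> nbrs P x" using xn nbrs_sym by metis
        moreover have "y \<in> nbrs P x" using e by (simp add: nbrs_def)
        ultimately have "y = c" by (metis card_1_singletonE singletonD)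
        then show ?thesis by simp
      qed
    qed simp
  next
    fix w assume "w \<in> insert c (nbrs P c)"
    then show "w \<in> {w. reach P c w}"
      by (auto simp: reach_def nbrs_def)
  qed
  then show ?thesis by (simp add: component_def verts_def)
qed

lemma comp_leaf:
  assumes s: "sgraph P" and l: "loc P" and v: "card (nbrs P v) = 1" and c: "c \<in> nbrs P v"
  shows "card (nbrs P c) = 2 \<and> verts (component P v) = insert c (nbrs P c)"
proof -
  have e: "{v, c} \<in> edges P" using c by (simp add: nbrs_def)
  have "(card (nbrs P v) = 2) = (card (nbrs P c) \<noteq> 2)" using l e unfolding loc_def by blast
  then have c2: "card (nbrs P c) = 2" using v by simp
  have "{w. reach P v w} = {w. reach P c w}"
    by (meson reach_edge[OF e] reach_sym reach_trans)
  then show ?thesis using comp_center[OF s l c2] c2 by (simp add: component_def verts_def)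
qed


lemma comp_edges: "edges (component P v) = {e \<in> edges P. e \<subseteq> verts (component P v)}"
  by (simp add: component_def edges_def verts_def)

lemma comp_verts: "verts (component P v) = {w. reach P v w}"
  by (simp add: component_def verts_def)

lemma loc_P3:
  assumes s: "sgraph P" and l: "loc P" and v: "v \<in> verts P"
  shows "is_P3 (component P v)"
proof -
  obtain c where c2: "card (nbrs P c) = 2" and cv: "verts (component P v) = insert c (nbrs P c)"
  proof (cases "card (nbrs P v) = 2")
    case True then show ?thesis using that comp_center[OF s l True] by blast
  next
    case False
    then have v1: "card (nbrs P v) = 1" using l v unfolding loc_def by blast
    then obtain c where "nbrs P v = {c}" by (metis card_1_singletonE)
    then have "c \<in> nbrs P v" by simp
    then show ?thesis using that comp_leaf[OF s l v1] by blast
  qed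
  obtain x z where xz: "x \<noteq> z" "nbrs P c = {x, z}" using c2 by (metis card_2_iff)
  have cn: "c \<notin> nbrs P c" by (rule nbrs_irrefl[OF s])
  then have cx: "c \<noteq> x" "c \<noteq> z" using xz by auto
  have ex: "{c, x} \<in> edges P" "{c, z} \<in> edges P" using xz by (auto simp: nbrs_def)
  have leaf: "nbrs P p = {c}" if "p \<in> {x, z}" for p
  proof -
    have e: "{c, p} \<in> edges P" using that ex by auto
    have pv: "p \<in> verts P" using sgraph_edge[OF s e] by simp
    have "card (nbrs P p) \<noteq> 2" using l e c2 unfolding loc_def by blast
    then have "card (nbrs P p) = 1" using l pv unfolding loc_def by blast
    moreover have "c \<in> nbrs P p" using e by (simp add: nbrs_def insert_commute)
    ultimately show ?thesis by (metis card_1_singletonE singletonD)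
  qed
  have E: "edges (component P v) = {{x, c}, {c, z}}"
  proof (rule set_eqI, rule iffI)
    fix e assume e: "e \<in> edges (component P v)"
    then have eP: "e \<in> edges P" and esub: "e \<subseteq> {c, x, z}" using comp_edges[of P v] cv xz by auto
    obtain p q where pq: "p \<noteq> q" "e = {p, q}" using sgraph_edgeE[OF s eP] by metis
    show "e \<in> {{x, c}, {c, z}}"
    proof (cases "c \<in> e")
      case True
      then show ?thesis using pq esub by (auto simp: insert_commute)
    next
      case False
      then have "e = {x, z}" using pq esub by auto
      then have "z \<in> nbrs P x" using eP by (simp add: nbrs_def)
      then show ?thesis using leaf[of x] cx by simp
    qed
  next
    fix e assume "e \<in> {{x, c}, {c, z}}"
    then show "e \<in> edges (component P v)"
      using ex comp_edges[of P v] cv xz by (auto simp: insert_commute)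
  qed
  show ?thesis unfolding is_P3_def
    apply (rule exI[of _ x], rule exI[of _ c], rule exI[of _ z])
    using cv xz E cx by auto
qed

lemma nbrs_comp:
  assumes "reach P v u"
  shows "nbrs P u = nbrs (component P v) u"
proof (rule set_eqI, rule iffI)
  fix w assume "w \<in> nbrs P u"
  then have e: "{u, w} \<in> edges P" by (simp add: nbrs_def)
  then have "reach P v w" using assms reach_edge reach_trans by metis
  then show "w \<in> nbrs (component P v) u"
    using e assms by (auto simp: nbrs_def component_def edges_def)
next
  fix w assume "w \<in> nbrs (component P v) u"
  then show "w \<in> nbrs P u" by (auto simp: nbrs_def component_def edges_def)
qed

lemma P3_nbrs:
  assumes "x \<noteq> y" "y \<noteq> z" "x \<noteq> z" "verts H = {x, y, z}" "edges H = {{x, y}, {y, z}}"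
  shows "nbrs H x = {y}" "nbrs H y = {x, z}" "nbrs H z = {y}"
  using assms by (auto simp: nbrs_def doubleton_eq_iff)

lemma P3_loc:
  assumes s: "sgraph P" and h: "\<forall>v\<in>verts P. is_P3 (component P v)"
  shows "loc P"
proof -
  have key: "(card (nbrs P u) = 1 \<or> card (nbrs P u) = 2) \<and>
     (\<forall>w. {u, w} \<in> edges P \<longrightarrow> (card (nbrs P u) = 2) = (card (nbrs P w) \<noteq> 2))"
    if u: "u \<in> verts P" for u
  proof -
    obtain x y z where p: "x \<noteq> y" "y \<noteq> z" "x \<noteq> z"
      "verts (component P u) = {x, y, z}" "edges (component P u) = {{x, y}, {y, z}}"
      using h u unfolding is_P3_def by metis
    have cnt: "card (nbrs P q) = (if q = y then 2 else 1)" if "q \<in> {x, y, z}" for q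
    proof -
      have "reach P u q" using that p(4) comp_verts[of P u] by auto
      then have "nbrs P q = nbrs (component P u) q" by (rule nbrs_comp)
      then show ?thesis using that P3_nbrs[OF p] p by auto
    qed
    have uin: "u \<in> {x, y, z}" using p(4) comp_verts[of P u] by (auto simp: reach_def)
    show ?thesis
    proof (intro conjI allI impI)
      show "card (nbrs P u) = 1 \<or> card (nbrs P u) = 2" using cnt[OF uin] by auto
    next
      fix w assume e: "{u, w} \<in> edges P"
      have "reach P u w" by (rule reach_edge[OF e])
      then have "{u, w} \<subseteq> verts (component P u)" using comp_verts[of P u] by (auto simp: reach_def)
      then have "{u, w} \<in> edges (component P u)" using e comp_edges[of P u] by auto
      then have "{u, w} = {x, y} \<or> {u, w} = {y, z}" using p(5) by auto
      moreover have "w \<in> {x, y, z}" using \<open>{u, w} \<subseteq> _\<close> p(4) by auto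
      ultimately have "(u = y) = (w \<noteq> y)" using p by (auto simp: doubleton_eq_iff)
      then show "(card (nbrs P u) = 2) = (card (nbrs P w) \<noteq> 2)"
        using cnt[OF uin] cnt[OF \<open>w \<in> {x, y, z}\<close>] by simp
    qed
  qed
  show ?thesis unfolding loc_def
  proof (intro conjI ballI allI impI)
    fix v assume "v \<in> verts P" then show "card (nbrs P v) = 1 \<or> card (nbrs P v) = 2" using key by blast
  next
    fix v w assume e: "{v, w} \<in> edges P"
    then have "v \<in> verts P" using sgraph_edge[OF s] by blast
    then show "(card (nbrs P v) = 2) = (card (nbrs P w) \<noteq> 2)" using key e by blast
  qed
qed

lemma lf_iff:
  assumes g: "graph G"
  shows "lambda_factor G P \<longleftrightarrow> verts P = verts G \<and> edges P \<subseteq> edges G \<and> loc P"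
proof -
  have s: "sgraph P" if "verts P = verts G" "edges P \<subseteq> edges G"
    using that graph_sgraph[OF g] unfolding sgraph_def by (metis subsetD)
  show ?thesis unfolding lambda_factor_def using s loc_P3 P3_loc by metis
qed


lemma cut_mem:
  assumes s: "sgraph H" and e: "{p, q} \<in> edges H"
  shows "{p, q} \<in> cut H U \<longleftrightarrow> (p \<in> U \<longleftrightarrow> q \<notin> U)"
proof -
  have pq: "p \<noteq> q" "p \<in> verts H" "q \<in> verts H" using sgraph_edge[OF s e] by auto
  show ?thesis
  proof
    assume "{p, q} \<in> cut H U"
    then obtain x y where "x \<in> U" "y \<in> verts H" "y \<notin> U" "{p, q} = {x, y}" by (auto simp: cut_def)
    then show "p \<in> U \<longleftrightarrow> q \<notin> U" by (auto simp: doubleton_eq_iff)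
  next
    assume h: "p \<in> U \<longleftrightarrow> q \<notin> U"
    show "{p, q} \<in> cut H U"
    proof (cases "p \<in> U")
      case True
      then have "q \<notin> U" using h by blast
      then show ?thesis unfolding cut_def using e pq True
        by (intro CollectI conjI bexI[of _ p] bexI[of _ q]) auto
    next
      case False
      then have "q \<in> U" using h by blast
      then show ?thesis unfolding cut_def using e pq False
        by (intro CollectI conjI bexI[of _ q] bexI[of _ p]) (auto simp: insert_commute)
    qed
  qed
qed

lemma cut_sub: "cut H U \<subseteq> edges H" by (auto simp: cut_def)

lemma cut_compl:
  assumes s: "sgraph H"
  shows "cut H (verts H - U) = cut H U"
proof (rule set_eqI, rule iffI)
  fix e assume e: "e \<in> cut H (verts H - U)"
  then have eE: "e \<in> edges H" using cut_sub by blast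
  obtain p q where pq: "e = {p, q}" "p \<in> verts H" "q \<in> verts H" using sgraph_edgeE[OF s eE] by metis
  show "e \<in> cut H U" using e cut_mem[OF s, of p q] eE pq by auto
next
  fix e assume e: "e \<in> cut H U"
  then have eE: "e \<in> edges H" using cut_sub by blast
  obtain p q where pq: "e = {p, q}" "p \<in> verts H" "q \<in> verts H" using sgraph_edgeE[OF s eE] by metis
  show "e \<in> cut H (verts H - U)" using e cut_mem[OF s, of p q] eE pq by auto
qed

lemma cut_single:
  assumes s: "sgraph H"
  shows "cut H {w} = star H w"
proof (rule set_eqI, rule iffI)
  fix e assume e: "e \<in> cut H {w}"
  then show "e \<in> star H w" by (auto simp: cut_def star_def)
next
  fix e assume e: "e \<in> star H w"
  then have eE: "e \<in> edges H" "w \<in> e" by (auto simp: star_def)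
  obtain p q where pq: "e = {p, q}" "p \<noteq> q" using sgraph_edgeE[OF s eE(1)] by metis
  then show "e \<in> cut H {w}" using cut_mem[OF s, of p q] eE by auto
qed

lemma cut_toggle_set:
  assumes s: "sgraph H" and w: "w \<notin> U"
  shows "cut H (insert w U) = (cut H U - star H w) \<union> (star H w - cut H U)"
proof (rule set_eqI)
  fix e
  show "e \<in> cut H (insert w U) \<longleftrightarrow> e \<in> (cut H U - star H w) \<union> (star H w - cut H U)"
  proof (cases "e \<in> edges H")
    case False
    then show ?thesis using cut_sub[of H] by (auto simp: star_def)
  next
    case True
    obtain p q where pq: "e = {p, q}" "p \<noteq> q" using sgraph_edgeE[OF s True] by metis
    have m1: "e \<in> cut H (insert w U) \<longleftrightarrow> (p \<in> insert w U \<longleftrightarrow> q \<notin> insert w U)"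
      using cut_mem[OF s] True pq by simp
    have m2: "e \<in> cut H U \<longleftrightarrow> (p \<in> U \<longleftrightarrow> q \<notin> U)"
      using cut_mem[OF s] True pq by simp
    have m3: "e \<in> star H w \<longleftrightarrow> (p = w \<or> q = w)" using True pq by (auto simp: star_def)
    show ?thesis using m1 m2 m3 w pq(2) by auto
  qed
qed

lemma cut_toggle:
  assumes s: "sgraph H" and fin: "finite (edges H)" and w: "w \<notin> U" and d: "card (star H w) = 3"
  shows "card (cut H U) + card (cut H (insert w U)) = 2 * card (cut H U - star H w) + 3"
proof -
  have f1: "finite (cut H U)" "finite (star H w)"
    using finite_subset[OF cut_sub fin] fin by (auto simp: star_def)
  have "card ((cut H U - star H w) \<union> (star H w - cut H U)) = card (cut H U - star H w) + card (star H w - cut H U)"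
    by (rule card_Un_disjoint) (use f1 in auto)
  then have "card (cut H (insert w U)) = card (cut H U - star H w) + card (star H w - cut H U)"
    by (subst cut_toggle_set[OF s w])
  moreover have "card (cut H U) = card (cut H U \<inter> star H w) + card (cut H U - star H w)"
    by (rule card_Int_Diff[OF f1(1)])
  moreover have "card (star H w) = card (star H w \<inter> cut H U) + card (star H w - cut H U)"
    by (rule card_Int_Diff[OF f1(2)])
  moreover have "star H w \<inter> cut H U = cut H U \<inter> star H w" by blast
  ultimately show ?thesis using d by simp
qed

lemma conn3:
  assumes c: "cubic H" and t: "three_connected H" and U: "U \<subseteq> verts H" "U \<noteq> {}" "U \<noteq> verts H"
  shows "card (cut H U) \<ge> 3"
proof (rule ccontr)
  assume less: "\<not> card (cut H U) \<ge> 3"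
  have g: "graph H" using c by (simp add: cubic_def)
  have s: "sgraph H" using graph_sgraph[OF g] .
  have fin: "finite (edges H)" using finite_edges[OF g] .
  have fV: "finite (verts H)" using g by (simp add: graph_def)
  have deg: "card (star H v) = 3" if "v \<in> verts H" for v
    using c that by (simp add: cubic_def degree_def star_def)
  have single: "card (cut H {x}) = 3" if "x \<in> verts H" for x
    using cut_single[OF s] deg[OF that] by simp
  have fU: "finite U" using finite_subset[OF U(1) fV] .
  show False
  proof (cases "card U \<ge> 3")
    case True
    define S where "S = (\<Union>e\<in>cut H U. e \<inter> U)"
    have one: "card (e \<inter> U) = 1" if ec: "e \<in> cut H U" for e
    proof -
      obtain x y where "x \<in> U" "y \<notin> U" "e = {x, y}" using ec unfolding cut_def by blast
      then have "e \<inter> U = {x}" by auto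
      then show ?thesis by simp
    qed
    have "card S \<le> (\<Sum>e\<in>cut H U. card (e \<inter> U))" unfolding S_def by (rule card_UN_le) (rule finite_subset[OF cut_sub fin])
    also have "\<dots> = card (cut H U)" using one by simp
    finally have cS: "card S \<le> 2" using less by simp
    have SU: "S \<subseteq> U" by (auto simp: S_def)
    have "connected (delete H S)" using t SU U(1) cS by (simp add: three_connected_def)
    have "U - S \<noteq> {}"
    proof
      assume "U - S = {}"
      then have "U \<subseteq> S" by blast
      then have "card U \<le> card S" using finite_subset[OF SU fU] by (simp add: card_mono)
      then show False using True cS by simp
    qed
    then obtain x where x: "x \<in> U" "x \<notin> S" by blast
    obtain y where y: "y \<in> verts H" "y \<notin> U" using U by blast
    have "x \<in> verts (delete H S)" "y \<in> verts (delete H S)" using x y U(1) SU by (auto simp: delete_def verts_def)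
    then have "reach (delete H S) x y" using \<open>connected (delete H S)\<close> by (simp add: connected_def)
    then have "y \<in> U - S"
    proof (rule reach_closed)
      fix p q assume p: "p \<in> U - S" and e: "{p, q} \<in> edges (delete H S)"
      then have eH: "{p, q} \<in> edges H" and qS: "q \<notin> S" by (auto simp: delete_def edges_def)
      show "q \<in> U - S"
      proof (rule ccontr)
        assume "q \<notin> U - S"
        then have "q \<notin> U" using qS by blast
        then have "{p, q} \<in> cut H U" using cut_mem[OF s eH] p by blast
        then have "p \<in> S" using p unfolding S_def by blast
        then show False using p by blast
      qed
    qed (use x in blast)
    then show False using y by blast
  next
    case False
    moreover have "card U \<noteq> 0" using U(2) fU by simp
    ultimately have "card U = 1 \<or> card U = 2" by arith
    then show False
    proof
      assume "card U = 1"
      then obtain x where "U = {x}" by (metis card_1_singletonE)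
      then show False using single U(1) less by auto
    next
      assume "card U = 2"
      then obtain x z where xz: "x \<noteq> z" "U = {x, z}" by (metis card_2_iff)
      have xv: "x \<in> verts H" "z \<in> verts H" using U(1) xz by auto
      have T: "card (cut H {x}) + card (cut H (insert z {x})) = 2 * card (cut H {x} - star H z) + 3"
        using cut_toggle[OF s fin _ deg[OF xv(2)]] xz by simp
      have "star H x - {{x, z}} \<subseteq> cut H {x} - star H z"
      proof
        fix e assume e: "e \<in> star H x - {{x, z}}"
        then have eE: "e \<in> edges H" "x \<in> e" "e \<noteq> {x, z}" by (auto simp: star_def)
        have "z \<notin> e"
        proof
          assume "z \<in> e"
          obtain p q where "e = {p, q}" using sgraph_edgeE[OF s eE(1)] by metis
          then have "e = {x, z}" using eE(2) \<open>z \<in> e\<close> xz(1) by auto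
          then show False using eE(3) by simp
        qed
        then show "e \<in> cut H {x} - star H z" using e cut_single[OF s, of x] by (simp add: star_def)
      qed
      then have "card (star H x - {{x, z}}) \<le> card (cut H {x} - star H z)"
        using finite_subset[OF cut_sub fin] by (metis card_mono finite_Diff)
      moreover have "card (star H x - {{x, z}}) \<ge> 2"
      proof -
        have "finite (star H x)" using fin by (simp add: star_def)
        then show ?thesis using deg[OF xv(1)] by (simp add: card_Diff_singleton_if)
      qed
      ultimately have "card (cut H (insert z {x})) \<ge> 4" using T single[OF xv(1)] by simp
      then show False using less xz by (simp add: insert_commute)
    qed
  qed
qed


definition oth :: "'b \<Rightarrow> 'b set \<Rightarrow> 'b" where "oth u f = the_elem (f - {u})"

lemma oth: "u \<noteq> v \<Longrightarrow> oth u {u, v} = v"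
proof -
  assume "u \<noteq> v"
  then have "{u, v} - {u} = {v}" by auto
  then show ?thesis by (simp add: oth_def)
qed

lemma graph_delete: "graph H \<Longrightarrow> graph (delete H S)"
proof -
  assume g: "graph H"
  have "\<exists>x y. x \<noteq> y \<and> x \<in> verts H - S \<and> y \<in> verts H - S \<and> e = {x, y}"
    if e1: "e \<in> edges H" and e2: "e \<inter> S = {}" for e
  proof -
    obtain x y where "x \<noteq> y" "x \<in> verts H" "y \<in> verts H" "e = {x, y}"
      using sgraph_edgeE[OF graph_sgraph[OF g] e1] by metis
    then show ?thesis using e2 by blast
  qed
  then show ?thesis using g unfolding graph_def delete_def by (simp add: verts_def edges_def)
qed

lemma star_eq: "star H u = {e \<in> edges H. u \<in> e}" by (simp add: star_def)

locale setting =
  fixes B :: "'b graph" and A :: "'b \<Rightarrow> 'a graph" and a :: "'b \<Rightarrow> 'a"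
    and phi :: "'b \<Rightarrow> 'b set \<Rightarrow> 'a"
  assumes cB: "cubic B" and tcB: "three_connected B"
    and A: "\<And>u. u \<in> verts B \<Longrightarrow> cubic (A u) \<and> three_connected (A u) \<and> a u \<in> verts (A u)"
    and phi: "\<And>u. u \<in> verts B \<Longrightarrow>
       bij_betw (phi u) {e \<in> edges B. u \<in> e} (nbrs (A u) (a u))"
    and hA: "\<And>u. u \<in> verts B \<Longrightarrow> card (verts (A u)) mod 6 = 2"
begin

abbreviation "G \<equiv> compose B A a phi"
definition aE :: "'b set \<Rightarrow> ('b \<times> 'a) set" where "aE f = (\<lambda>w. (w, phi w f)) ` f"
definition nE :: "'b \<Rightarrow> 'b set \<Rightarrow> 'b \<times> 'a" where "nE u f = (u, phi u f)"
definition mE :: "'b \<Rightarrow> 'b set \<Rightarrow> 'b \<times> 'a" where "mE u f = (oth u f, phi (oth u f) f)"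
abbreviation "C u \<equiv> VA A a u"

lemma gB: "graph B" using cB by (simp add: cubic_def)
lemma sB: "sgraph B" using gB by (rule graph_sgraph)
lemma gA: "u \<in> verts B \<Longrightarrow> graph (A u)" using A by (simp add: cubic_def)
lemma sA: "u \<in> verts B \<Longrightarrow> sgraph (A u)" using gA by (rule graph_sgraph)
lemma aA: "u \<in> verts B \<Longrightarrow> a u \<in> verts (A u)" using A by simp
lemma finA: "u \<in> verts B \<Longrightarrow> finite (verts (A u))" using gA by (simp add: graph_def)
lemma finB: "finite (verts B)" using gB by (simp add: graph_def)

lemma star_B:
  assumes "u \<in> verts B" "f \<in> star B u"
  shows "f = {u, oth u f} \<and> oth u f \<noteq> u \<and> oth u f \<in> verts B \<and> f \<in> edges B"
proof -
  have f: "f \<in> edges B" "u \<in> f" using assms by (auto simp: star_def)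
  obtain x y where xy: "x \<noteq> y" "x \<in> verts B" "y \<in> verts B" "f = {x, y}"
    using sgraph_edgeE[OF sB f(1)] by metis
  show ?thesis
  proof (cases "u = x")
    case True then show ?thesis using xy f oth[of x y] by auto
  next
    case False
    then have "u = y" using xy f by auto
    then show ?thesis using xy f oth[of y x] by (auto simp: insert_commute)
  qed
qed

lemma phi_in:
  assumes "u \<in> verts B" "f \<in> star B u"
  shows "phi u f \<in> nbrs (A u) (a u) \<and> phi u f \<in> verts (A u) \<and> phi u f \<noteq> a u"
proof -
  have "phi u f \<in> nbrs (A u) (a u)"
    using phi[OF assms(1)] assms(2) unfolding bij_betw_def star_def by auto
  moreover have "nbrs (A u) (a u) \<subseteq> verts (A u)" by (rule nbrs_sub[OF sA[OF assms(1)]])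
  moreover have "a u \<notin> nbrs (A u) (a u)" by (rule nbrs_irrefl[OF sA[OF assms(1)]])
  ultimately show ?thesis by (metis subsetD)
qed

lemma phi_inj:
  "u \<in> verts B \<Longrightarrow> f \<in> star B u \<Longrightarrow> g \<in> star B u \<Longrightarrow> phi u f = phi u g \<Longrightarrow> f = g"
  using phi unfolding bij_betw_def inj_on_def star_def by blast

lemma N_img: "u \<in> verts B \<Longrightarrow> nbrs (A u) (a u) = phi u ` star B u"
  using phi unfolding bij_betw_def star_def by blast

lemma oth_mem: "u \<in> verts B \<Longrightarrow> f \<in> star B u \<Longrightarrow> f \<in> star B (oth u f) \<and> oth (oth u f) f = u"
proof -
  assume a: "u \<in> verts B" "f \<in> star B u"
  have s: "f = {u, oth u f}" "oth u f \<noteq> u" "f \<in> edges B" using star_B[OF a] by auto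
  then have "oth (oth u f) f = u" using oth[of "oth u f" u] by (metis insert_commute)
  then show ?thesis using s by (auto simp: star_def)
qed

lemma mE_nE: "u \<in> verts B \<Longrightarrow> f \<in> star B u \<Longrightarrow> mE u f = nE (oth u f) f"
  by (simp add: mE_def nE_def)

lemma aE_star: "u \<in> verts B \<Longrightarrow> f \<in> star B u \<Longrightarrow> aE f = {nE u f, mE u f}"
proof -
  assume a: "u \<in> verts B" "f \<in> star B u"
  have s: "f = {u, oth u f}" using star_B[OF a] by auto
  show ?thesis unfolding aE_def nE_def mE_def by (subst s) auto
qed

lemma fst_mE: "u \<in> verts B \<Longrightarrow> f \<in> star B u \<Longrightarrow> fst (mE u f) \<noteq> u \<and> fst (nE u f) = u"
  using star_B by (simp add: mE_def nE_def)

lemma alpha_eq: "alpha phi u v = aE {u, v}"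
  by (simp add: alpha_def aE_def insert_commute)

lemma vertsG: "p \<in> verts G \<longleftrightarrow> fst p \<in> verts B \<and> snd p \<in> verts (A (fst p)) \<and> snd p \<noteq> a (fst p)"
  by (cases p) (auto simp: compose_def verts_def VA_def)

lemma inC: "p \<in> C u \<longleftrightarrow> fst p = u \<and> snd p \<in> verts (A u) \<and> snd p \<noteq> a u"
  by (cases p) (auto simp: VA_def)

lemma edgesG: "e \<in> edges G \<longleftrightarrow>
   (\<exists>u x y. u \<in> verts B \<and> {x, y} \<in> edges (A u) \<and> x \<noteq> a u \<and> y \<noteq> a u \<and> e = {(u, x), (u, y)})
   \<or> (\<exists>f\<in>edges B. e = aE f)"
proof -
  have "e \<in> edges G \<longleftrightarrow>
   (\<exists>u x y. e = {(u, x), (u, y)} \<and> u \<in> verts B \<and> {x, y} \<in> edges (A u) \<and> {x, y} \<inter> {a u} = {})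
   \<or> (\<exists>u v. e = alpha phi u v \<and> {u, v} \<in> edges B)"
    by (simp add: compose_def edges_def delete_def)
  also have "\<dots> \<longleftrightarrow>
   (\<exists>u x y. u \<in> verts B \<and> {x, y} \<in> edges (A u) \<and> x \<noteq> a u \<and> y \<noteq> a u \<and> e = {(u, x), (u, y)})
   \<or> (\<exists>f\<in>edges B. e = aE f)"
  proof -
    have "(\<exists>u v. e = alpha phi u v \<and> {u, v} \<in> edges B) \<longleftrightarrow> (\<exists>f\<in>edges B. e = aE f)"
    proof
      assume "\<exists>u v. e = alpha phi u v \<and> {u, v} \<in> edges B"
      then show "\<exists>f\<in>edges B. e = aE f" using alpha_eq by metis
    next
      assume "\<exists>f\<in>edges B. e = aE f"
      then obtain f where f: "f \<in> edges B" "e = aE f" by blast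
      obtain x y where "f = {x, y}" using sgraph_edgeE[OF sB f(1)] by metis
      then show "\<exists>u v. e = alpha phi u v \<and> {u, v} \<in> edges B" using f alpha_eq by metis
    qed
    then show ?thesis by auto
  qed
  finally show ?thesis .
qed

lemma graphG: "graph G"
  unfolding graph_def
proof (intro conjI ballI)
  show "finite (verts G)"
    using finB finA by (simp add: compose_def verts_def VA_def)
next
  fix e assume "e \<in> edges G"
  then consider (i) u x y where "u \<in> verts B" "{x, y} \<in> edges (A u)" "x \<noteq> a u" "y \<noteq> a u" "e = {(u, x), (u, y)}"
    | (ii) f where "f \<in> edges B" "e = aE f" using edgesG by metis
  then show "\<exists>x y. x \<noteq> y \<and> x \<in> verts G \<and> y \<in> verts G \<and> e = {x, y}"
  proof cases
    case i
    then have "x \<noteq> y \<and> x \<in> verts (A u) \<and> y \<in> verts (A u)" using sgraph_edge[OF sA] by blast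
    then show ?thesis using i vertsG by (intro exI[of _ "(u, x)"] exI[of _ "(u, y)"]) auto
  next
    case ii
    obtain u v where uv: "u \<noteq> v" "u \<in> verts B" "v \<in> verts B" "f = {u, v}"
      using sgraph_edgeE[OF sB ii(1)] by metis
    have fs: "f \<in> star B u" "f \<in> star B v" using uv ii by (auto simp: star_def)
    show ?thesis
      using ii uv phi_in[OF uv(2) fs(1)] phi_in[OF uv(3) fs(2)] vertsG
      by (intro exI[of _ "(u, phi u f)"] exI[of _ "(v, phi v f)"]) (auto simp: aE_def)
  qed
qed

lemma sG: "sgraph G" using graphG by (rule graph_sgraph)

lemma edge_cases:
  assumes "e \<in> edges G"
  obtains (i) u' x' y' where "u' \<in> verts B" "{x', y'} \<in> edges (A u')" "x' \<noteq> a u'" "y' \<noteq> a u'"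
      "e = {(u', x'), (u', y')}"
    | (ii) f where "f \<in> edges B" "e = aE f"
  using assms edgesG by metis

lemma edge_same0:
  assumes "e \<in> edges G" "e = {(u, y), (u, z)}"
  shows "u \<in> verts B \<and> {y, z} \<in> edges (A u) \<and> y \<noteq> a u \<and> z \<noteq> a u"
  using assms(1)
proof (cases rule: edge_cases)
  case (i u' x' y')
  have "(u, y) \<in> e" using assms(2) by simp
  then have uu: "u' = u" using i(5) by auto
  then have "{(u, y), (u, z)} = {(u, x'), (u, y')}" using i(5) assms(2) by simp
  then have "snd ` {(u, y), (u, z)} = snd ` {(u, x'), (u, y')}" by (rule arg_cong)
  then have "{y, z} = {x', y'}" by simp
  then show ?thesis using i uu by auto
next
  case (ii f)
  obtain v w where vw: "v \<noteq> w" "f = {v, w}" using sgraph_edgeE[OF sB ii(1)] by metis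
  then have e: "e = {(v, phi v f), (w, phi w f)}" using ii by (simp add: aE_def)
  have "(v, phi v f) \<in> e" "(w, phi w f) \<in> e" using e by simp_all
  then have "v = u" "w = u" using assms(2) by auto
  then show ?thesis using vw by simp
qed

lemma edge_same:
  assumes "{(u, y), (u, z)} \<in> edges G"
  shows "u \<in> verts B \<and> {y, z} \<in> edges (A u) \<and> y \<noteq> a u \<and> z \<noteq> a u"
  using edge_same0[OF assms refl] .

lemma edge_cross0:
  assumes "e \<in> edges G" "e = {p, r}" "fst r \<noteq> fst p"
  shows "fst p \<in> verts B \<and> (\<exists>f\<in>star B (fst p). p = nE (fst p) f \<and> r = mE (fst p) f)"
  using assms(1)
proof (cases rule: edge_cases)
  case (i u' x' y')
  have "p \<in> e" "r \<in> e" using assms(2) by simp_all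
  then have "fst p = u'" "fst r = u'" using i(5) by auto
  then show ?thesis using assms(3) by simp
next
  case (ii f)
  obtain v w where vw: "v \<noteq> w" "v \<in> verts B" "w \<in> verts B" "f = {v, w}"
    using sgraph_edgeE[OF sB ii(1)] by metis
  then have pr: "e = {(v, phi v f), (w, phi w f)}" using ii by (simp add: aE_def)
  have pe: "p \<in> e" "r \<in> e" using assms(2) by simp_all
  show ?thesis
  proof (cases "p = (v, phi v f)")
    case True
    have "r = (w, phi w f)" using pe pr True assms(3) by auto
    moreover have "f \<in> star B v" using vw ii by (auto simp: star_def)
    moreover have "oth v f = w" using vw oth by metis
    ultimately show ?thesis using True vw by (intro conjI bexI[of _ f]) (simp_all add: nE_def mE_def)
  next
    case False
    then have p: "p = (w, phi w f)" using pe pr by auto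
    then have "r = (v, phi v f)" using pe pr assms(3) vw by auto
    moreover have "f \<in> star B w" using vw ii by (auto simp: star_def)
    moreover have "oth w f = v" using vw oth by (metis insert_commute)
    ultimately show ?thesis using p vw by (intro conjI bexI[of _ f]) (simp_all add: nE_def mE_def)
  qed
qed

lemma edge_cross:
  assumes "{p, r} \<in> edges G" "fst r \<noteq> fst p"
  shows "fst p \<in> verts B \<and> (\<exists>f\<in>star B (fst p). p = nE (fst p) f \<and> r = mE (fst p) f)"
  using edge_cross0[OF assms(1) refl assms(2)] .

lemma aE_edge: "u \<in> verts B \<Longrightarrow> f \<in> star B u \<Longrightarrow> aE f \<in> edges G"
  unfolding edgesG by (rule disjI2, rule bexI[of _ f]) (simp_all add: star_def)

lemma nE_in: "u \<in> verts B \<Longrightarrow> f \<in> star B u \<Longrightarrow> nE u f \<in> C u"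
proof -
  assume "u \<in> verts B" "f \<in> star B u"
  then have "phi u f \<in> verts (A u) \<and> phi u f \<noteq> a u" using phi_in by blast
  then show ?thesis by (simp add: nE_def VA_def)
qed

lemma card_star: "u \<in> verts B \<Longrightarrow> card (star B u) = 3"
  using cB by (simp add: cubic_def degree_def star_def)

lemma finite_star: "finite (star B u)"
  using finite_edges[OF gB] by (simp add: star_def)

end

locale lfP = setting B A a phi for B :: "'b graph" and A :: "'b \<Rightarrow> 'a graph" and a phi +
  fixes P :: "('b \<times> 'a) graph"
  assumes lfP: "lambda_factor (compose B A a phi) P"
begin

lemma PV: "verts P = verts G" and PE: "edges P \<subseteq> edges G" and locP: "loc P"
  using lfP lf_iff[OF graphG] by auto

lemma locE: "{p, q} \<in> edges P \<Longrightarrow> (card (nbrs P p) = 2) = (card (nbrs P q) \<noteq> 2)"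
  using locP unfolding loc_def by blast

lemma locV: "p \<in> verts P \<Longrightarrow> card (nbrs P p) = 1 \<or> card (nbrs P p) = 2"
  using locP unfolding loc_def by blast

lemma sP: "sgraph P"
  using sG PV PE unfolding sgraph_def by (metis subsetD)

definition Kp :: "'b \<Rightarrow> 'b set set" where "Kp u = {f \<in> star B u. aE f \<in> edges P}"
definition Kin :: "'b \<Rightarrow> 'b set set" where "Kin u = {f \<in> Kp u. card (nbrs P (nE u f)) = 1}"
definition Kout :: "'b \<Rightarrow> 'b set set" where "Kout u = {f \<in> Kp u. card (nbrs P (nE u f)) = 2}"

lemma CG: "u \<in> verts B \<Longrightarrow> C u \<subseteq> verts G"
  by (auto simp: vertsG inC)

lemma finC: "u \<in> verts B \<Longrightarrow> finite (C u)"
  unfolding VA_def using finA by simp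

lemma mod_aux: "(n::nat) mod 6 = 2 \<Longrightarrow> (n - 1) mod 3 = 1"
proof -
  assume "n mod 6 = 2"
  then obtain k where "n = 6 * k + 2" by (metis div_mod_decomp mult.commute)
  then have "n - 1 = 1 + 3 * (2 * k)" by simp
  moreover have "(1 + 3 * (2 * k)) mod 3 = (1::nat) mod 3" by (rule mod_mult_self2)
  ultimately show ?thesis by simp
qed
lemma mod_aux2: "2 * c = 3 * i + x \<Longrightarrow> c mod 3 = 1 \<Longrightarrow> x mod 3 = (2::nat)"
proof -
  assume h: "2 * c = 3 * i + x" "c mod 3 = 1"
  have "x mod 3 = (3 * i + x) mod 3" by simp
  also have "\<dots> = (2 * c) mod 3" using h(1) by simp
  also have "\<dots> = (2 * (c mod 3)) mod 3" by (simp add: mod_mult_right_eq)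
  also have "\<dots> = 2" using h(2) by simp
  finally show ?thesis .
qed

lemma cardC: "u \<in> verts B \<Longrightarrow> card (C u) mod 3 = 1"
proof -
  assume u: "u \<in> verts B"
  have "C u = Pair u ` (verts (A u) - {a u})" unfolding VA_def by auto
  moreover have "inj_on (Pair u) (verts (A u) - {a u})" by (simp add: inj_on_def)
  ultimately have "card (C u) = card (verts (A u) - {a u})" by (simp add: card_image)
  also have "\<dots> = card (verts (A u)) - 1" using aA[OF u] finA[OF u] by simp
  finally have "card (C u) = card (verts (A u)) - 1" .
  then show ?thesis using mod_aux[OF hA[OF u]] by simp
qed

lemma cross_nbr:
  assumes u: "u \<in> verts B" and p: "p \<in> C u" and r: "r \<in> nbrs P p" and rC: "r \<notin> C u"
  shows "\<exists>f\<in>star B u. p = nE u f \<and> r = mE u f \<and> f \<in> Kp u"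
proof -
  have e: "{p, r} \<in> edges P" using r by (simp add: nbrs_def)
  then have eG: "{p, r} \<in> edges G" using PE by blast
  have rv: "r \<in> verts G" using sgraph_edge[OF sP e] PV by simp
  have fp: "fst p = u" using p by (simp add: inC)
  have "fst r \<noteq> u"
  proof
    assume "fst r = u"
    then have "r \<in> C u" using rv by (simp add: vertsG inC)
    then show False using rC by simp
  qed
  then obtain f where f: "f \<in> star B u" "p = nE u f" "r = mE u f"
    using edge_cross[OF eG] fp by metis
  have "aE f = {p, r}" using aE_star[OF u f(1)] f by simp
  then have "f \<in> Kp u" using e f by (simp add: Kp_def)
  then show ?thesis using f by blast
qed

lemma Kp_edge: "u \<in> verts B \<Longrightarrow> f \<in> Kp u \<Longrightarrow> {nE u f, mE u f} \<in> edges P"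
  using aE_star[of u f] by (simp add: Kp_def)

lemma mE_nbr: "u \<in> verts B \<Longrightarrow> f \<in> Kp u \<Longrightarrow> mE u f \<in> nbrs P (nE u f)"
  using Kp_edge by (simp add: nbrs_def)

lemma mE_notC: "u \<in> verts B \<Longrightarrow> f \<in> star B u \<Longrightarrow> mE u f \<notin> C u"
  using fst_mE by (auto simp: inC)

lemma nE_inj: "u \<in> verts B \<Longrightarrow> f \<in> star B u \<Longrightarrow> g \<in> star B u \<Longrightarrow> nE u f = nE u g \<Longrightarrow> f = g"
  using phi_inj by (simp add: nE_def)

lemma finnbrs: "finite (nbrs P p)"
proof -
  have "nbrs P p \<subseteq> verts G" using nbrs_sub[OF sP] PV by simp
  then show ?thesis using graphG finite_subset unfolding graph_def by blast
qed

lemma count: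
  assumes u: "u \<in> verts B"
  shows "(card (Kout u) + 2 * card (Kin u)) mod 3 = 2"
proof -
  define Ct where "Ct = {p \<in> C u. card (nbrs P p) = 2}"
  define Lf where "Lf = {p \<in> C u. card (nbrs P p) = 1}"
  have fCt: "finite Ct" "finite Lf" using finC[OF u] by (simp_all add: Ct_def Lf_def)
  have "C u = Ct \<union> Lf"
  proof -
    have "\<forall>p\<in>C u. card (nbrs P p) = 1 \<or> card (nbrs P p) = 2"
      using locP CG[OF u] PV unfolding loc_def by auto
    then show ?thesis by (auto simp: Ct_def Lf_def)
  qed
  moreover have "Ct \<inter> Lf = {}" by (auto simp: Ct_def Lf_def)
  ultimately have cC: "card (C u) = card Ct + card Lf" using fCt card_Un_disjoint by metis
  define S1 where "S1 = (SIGMA q:Ct. nbrs P q \<inter> C u)"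
  define S2 where "S2 = (SIGMA p:Lf. nbrs P p \<inter> C u)"
  define S1' where "S1' = (SIGMA q:Ct. nbrs P q - C u)"
  define S2' where "S2' = (SIGMA p:Lf. nbrs P p - C u)"
  have leafnb: "card (nbrs P q) \<noteq> 2" if "card (nbrs P p) = 2" "q \<in> nbrs P p" for p q
  proof -
    have "{p, q} \<in> edges P" using that by (simp add: nbrs_def)
    then show ?thesis using locP that(1) unfolding loc_def by blast
  qed
  have qv: "q \<in> verts P" if "q \<in> nbrs P p" for p q
    using that nbrs_sub[OF sP] by blast
  have "card S1 = card S2"
  proof -
    have "bij_betw (\<lambda>(q, p). (p, q)) S1 S2"
    proof (rule bij_betw_byWitness[where f' = "\<lambda>(p, q). (q, p)"])
      show "\<forall>x\<in>S1. (\<lambda>(p, q). (q, p)) ((\<lambda>(q, p). (p, q)) x) = x" by auto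
      show "\<forall>x\<in>S2. (\<lambda>(q, p). (p, q)) ((\<lambda>(p, q). (q, p)) x) = x" by auto
      show "(\<lambda>(q, p). (p, q)) ` S1 \<subseteq> S2"
      proof
        fix x assume "x \<in> (\<lambda>(q, p). (p, q)) ` S1"
        then obtain q p where x: "x = (p, q)" and q: "q \<in> Ct" and p: "p \<in> nbrs P q" "p \<in> C u"
          by (auto simp: S1_def)
        have "card (nbrs P q) = 2" using q by (simp add: Ct_def)
        then have "card (nbrs P p) \<noteq> 2" using leafnb p(1) by blast
        moreover have "p \<in> verts P" using qv p by blast
        ultimately have "card (nbrs P p) = 1" using locP unfolding loc_def by blast
        then show "x \<in> S2" using x q p nbrs_sym[of p P q] by (auto simp: S2_def Lf_def Ct_def)
      qed
      show "(\<lambda>(p, q). (q, p)) ` S2 \<subseteq> S1"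
      proof
        fix x assume "x \<in> (\<lambda>(p, q). (q, p)) ` S2"
        then obtain q p where x: "x = (q, p)" and p: "p \<in> Lf" and q: "q \<in> nbrs P p" "q \<in> C u"
          by (auto simp: S2_def)
        have "{p, q} \<in> edges P" using q by (simp add: nbrs_def)
        then have "card (nbrs P q) = 2" using locE[of p q] p by (simp add: Lf_def)
        then show "x \<in> S1" using x q p nbrs_sym[of q P p] by (auto simp: S1_def Lf_def Ct_def)
      qed
    qed
    then show ?thesis by (rule bij_betw_same_card)
  qed
  have g_inj: "inj_on (\<lambda>f. (nE u f, mE u f)) (Kp u)"
    by (rule inj_onI) (use nE_inj[OF u] in \<open>auto simp: Kp_def\<close>)
  have "S1' = (\<lambda>f. (nE u f, mE u f)) ` Kout u"
  proof (rule set_eqI, rule iffI)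
    fix x assume "x \<in> S1'"
    then obtain q r where x: "x = (q, r)" "q \<in> Ct" "r \<in> nbrs P q" "r \<notin> C u" by (auto simp: S1'_def)
    obtain f where f: "f \<in> star B u" "q = nE u f" "r = mE u f" "f \<in> Kp u"
      using cross_nbr[OF u _ x(3) x(4)] x(2) by (auto simp: Ct_def)
    have "f \<in> Kout u" using f x(2) by (simp add: Kout_def Ct_def)
    then show "x \<in> (\<lambda>f. (nE u f, mE u f)) ` Kout u" using x f by auto
  next
    fix x assume "x \<in> (\<lambda>f. (nE u f, mE u f)) ` Kout u"
    then obtain f where f: "f \<in> Kout u" "x = (nE u f, mE u f)" by auto
    have fs: "f \<in> star B u" "f \<in> Kp u" using f by (auto simp: Kout_def Kp_def)
    show "x \<in> S1'" using f fs nE_in[OF u fs(1)] mE_nbr[OF u fs(2)] mE_notC[OF u fs(1)]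
      by (auto simp: S1'_def Ct_def Kout_def)
  qed
  moreover have "Kout u \<subseteq> Kp u" by (auto simp: Kout_def)
  then have "inj_on (\<lambda>f. (nE u f, mE u f)) (Kout u)" by (rule inj_on_subset[OF g_inj])
  ultimately have cS1': "card S1' = card (Kout u)" by (simp add: card_image)
  have "S2' = (\<lambda>f. (nE u f, mE u f)) ` Kin u"
  proof (rule set_eqI, rule iffI)
    fix x assume "x \<in> S2'"
    then obtain q r where x: "x = (q, r)" "q \<in> Lf" "r \<in> nbrs P q" "r \<notin> C u" by (auto simp: S2'_def)
    obtain f where f: "f \<in> star B u" "q = nE u f" "r = mE u f" "f \<in> Kp u"
      using cross_nbr[OF u _ x(3) x(4)] x(2) by (auto simp: Lf_def)
    have "f \<in> Kin u" using f x(2) by (simp add: Kin_def Lf_def)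
    then show "x \<in> (\<lambda>f. (nE u f, mE u f)) ` Kin u" using x f by auto
  next
    fix x assume "x \<in> (\<lambda>f. (nE u f, mE u f)) ` Kin u"
    then obtain f where f: "f \<in> Kin u" "x = (nE u f, mE u f)" by auto
    have fs: "f \<in> star B u" "f \<in> Kp u" using f by (auto simp: Kin_def Kp_def)
    show "x \<in> S2'" using f fs nE_in[OF u fs(1)] mE_nbr[OF u fs(2)] mE_notC[OF u fs(1)]
      by (auto simp: S2'_def Lf_def Kin_def)
  qed
  moreover have "Kin u \<subseteq> Kp u" by (auto simp: Kin_def)
  then have "inj_on (\<lambda>f. (nE u f, mE u f)) (Kin u)" by (rule inj_on_subset[OF g_inj])
  ultimately have cS2': "card S2' = card (Kin u)" by (simp add: card_image)
  have split: "card (nbrs P q) = card (nbrs P q \<inter> C u) + card (nbrs P q - C u)" for q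
    using finnbrs by (metis card_Int_Diff)
  have "2 * card Ct = (\<Sum>q\<in>Ct. card (nbrs P q))" by (simp add: Ct_def)
  also have "\<dots> = (\<Sum>q\<in>Ct. card (nbrs P q \<inter> C u)) + (\<Sum>q\<in>Ct. card (nbrs P q - C u))"
    by (simp add: split sum.distrib)
  also have "\<dots> = card S1 + card S1'"
    using fCt finnbrs by (simp add: S1_def S1'_def)
  finally have e1: "2 * card Ct = card S1 + card (Kout u)" using cS1' by simp
  have "card Lf = (\<Sum>q\<in>Lf. card (nbrs P q))" by (simp add: Lf_def)
  also have "\<dots> = (\<Sum>q\<in>Lf. card (nbrs P q \<inter> C u)) + (\<Sum>q\<in>Lf. card (nbrs P q - C u))"
    by (simp add: split sum.distrib)
  also have "\<dots> = card S2 + card S2'"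
    using fCt finnbrs by (simp add: S2_def S2'_def)
  finally have e2: "card Lf = card S1 + card (Kin u)" using cS2' \<open>card S1 = card S2\<close> by simp
  have "card (C u) mod 3 = 1" by (rule cardC[OF u])
  have "2 * card (C u) = 3 * card S1 + (card (Kout u) + 2 * card (Kin u))" using cC e1 e2 by simp
  then show ?thesis using mod_aux2 \<open>card (C u) mod 3 = 1\<close> by blast
qed


lemma arith3:
  fixes ki ko :: nat
  assumes "ki + ko \<le> 3" "(ko + 2 * ki) mod 3 = 2"
  shows "(ki = 1 \<and> ko = 0) \<or> (ki = 0 \<and> ko = 2) \<or> (ki = 2 \<and> ko = 1)"
proof -
  have "ki \<in> {0, 1, 2, 3}" "ko \<in> {0, 1, 2, 3}" using assms(1) by auto
  then show ?thesis using assms by auto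
qed

lemma Kp_split: "u \<in> verts B \<Longrightarrow> Kp u = Kin u \<union> Kout u \<and> Kin u \<inter> Kout u = {}"
proof -
  assume u: "u \<in> verts B"
  have "card (nbrs P (nE u f)) = 1 \<or> card (nbrs P (nE u f)) = 2" if "f \<in> Kp u" for f
  proof -
    have "f \<in> star B u" using that by (simp add: Kp_def)
    then have "nE u f \<in> verts P" using nE_in[OF u] CG[OF u] PV by blast
    then show ?thesis by (rule locV)
  qed
  then show ?thesis by (auto simp: Kin_def Kout_def)
qed

lemma Kp_star: "Kp u \<subseteq> star B u" by (auto simp: Kp_def)

lemma fin_Kp: "finite (Kp u)" "finite (Kin u)" "finite (Kout u)"
  using finite_subset[OF Kp_star finite_star] by (auto simp: Kin_def Kout_def)

lemma Kcases:
  assumes u: "u \<in> verts B"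
  shows "(card (Kin u) = 1 \<and> card (Kout u) = 0) \<or> (card (Kin u) = 0 \<and> card (Kout u) = 2)
    \<or> (card (Kin u) = 2 \<and> card (Kout u) = 1)"
proof -
  have "card (Kp u) = card (Kin u) + card (Kout u)"
    using Kp_split[OF u] fin_Kp card_Un_disjoint by metis
  moreover have "card (Kp u) \<le> 3" using card_mono[OF finite_star[of u] Kp_star[of u]] card_star[OF u] by simp
  ultimately show ?thesis using arith3 count[OF u] by simp
qed

lemma leaf_nbrs:
  assumes "card (nbrs P p) = 1" "q \<in> nbrs P p"
  shows "nbrs P p = {q}"
  using assms by (metis card_1_singletonE singletonD)

lemma no21:
  assumes u: "u \<in> verts B"
    and h1: "\<And>x. x \<in> verts (A u) - (nbrs (A u) (a u) \<union> {a u}) \<Longrightarrow>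
       (\<exists>y\<in>nbrs (A u) (a u). {x, y} \<in> edges (A u)) \<Longrightarrow>
       \<not> has_lambda_factor (delete (A u) (nbrs (A u) (a u) \<union> {a u, x}))"
    and ki: "card (Kin u) = 2" and ko: "card (Kout u) = 1"
  shows False
proof -
  obtain f3 where f3: "Kout u = {f3}" using ko by (metis card_1_singletonE)
  obtain f1 f2 where f12: "f1 \<noteq> f2" "Kin u = {f1, f2}" using ki by (metis card_2_iff)
  have f3p: "f3 \<in> Kp u" "f3 \<in> star B u" "card (nbrs P (nE u f3)) = 2"
    using f3 by (auto simp: Kout_def Kp_def)
  have fip: "f \<in> Kp u" "f \<in> star B u" "card (nbrs P (nE u f)) = 1" if "f \<in> {f1, f2}" for f
    using that f12 by (auto simp: Kin_def Kp_def)
  define p3 where "p3 = nE u f3"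
  have m3: "mE u f3 \<in> nbrs P p3" using mE_nbr[OF u f3p(1)] by (simp add: p3_def)
  obtain r where r: "r \<in> nbrs P p3" "r \<noteq> mE u f3"
  proof -
    obtain x z where "x \<noteq> z" "nbrs P p3 = {x, z}" using f3p(3) p3_def by (metis card_2_iff)
    then show ?thesis using that m3 by blast
  qed
  have rC: "r \<in> C u"
  proof (rule ccontr)
    assume "r \<notin> C u"
    then obtain g where g: "g \<in> star B u" "p3 = nE u g" "r = mE u g"
      using cross_nbr[OF u _ r(1)] nE_in[OF u f3p(2)] p3_def by metis
    have "g = f3" using nE_inj[OF u g(1) f3p(2)] g(2) p3_def by simp
    then show False using g r by simp
  qed
  define x where "x = snd r"
  have rx: "r = (u, x)" using rC by (cases r) (simp add: inC x_def)
  have e3: "{p3, r} \<in> edges P" using r(1) by (simp add: nbrs_def)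
  then have "{(u, phi u f3), (u, x)} \<in> edges G" using PE rx by (auto simp: p3_def nE_def)
  then have ax: "{phi u f3, x} \<in> edges (A u)" "x \<noteq> a u" using edge_same by blast+
  have rleaf: "nbrs P r = {p3}"
  proof -
    have "card (nbrs P r) \<noteq> 2" using locE[OF e3] f3p(3) p3_def by simp
    moreover have "r \<in> verts P" using rC CG[OF u] PV by blast
    ultimately have "card (nbrs P r) = 1" using locV by blast
    moreover have "p3 \<in> nbrs P r" using r(1) nbrs_sym by metis
    ultimately show ?thesis by (rule leaf_nbrs)
  qed
  have fileaf: "nbrs P (nE u f) = {mE u f}" if "f \<in> {f1, f2}" for f
    using leaf_nbrs[OF fip(3)[OF that] mE_nbr[OF u fip(1)[OF that]]] .
  have Kps: "Kp u = {f1, f2, f3}" using Kp_split[OF u] f3 f12 by auto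
  have "card (Kp u) = 3"
  proof -
    have "f3 \<notin> {f1, f2}" using Kp_split[OF u] f3 f12 by auto
    then show ?thesis using Kps f12 by (auto simp: card_insert_if)
  qed
  then have starK: "star B u = {f1, f2, f3}"
    using card_subset_eq[OF finite_star[of u] Kp_star[of u]] card_star[OF u] Kps by metis
  have N: "nbrs (A u) (a u) = {phi u f1, phi u f2, phi u f3}" using N_img[OF u] starK by simp
  have xN: "x \<notin> nbrs (A u) (a u)"
  proof
    assume "x \<in> nbrs (A u) (a u)"
    then obtain g where g: "g \<in> {f1, f2, f3}" "x = phi u g" using N by auto
    then have rg: "r = nE u g" using rx by (simp add: nE_def)
    show False
    proof (cases "g = f3")
      case True then show ?thesis using rg r(1) nbrs_irrefl[OF sP] p3_def by simp
    next
      case False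
      then have "g \<in> {f1, f2}" using g by auto
      then have "nbrs P r = {mE u g}" using fileaf rg by simp
      then have "p3 = mE u g" using rleaf by simp
      moreover have "g \<in> star B u" using starK g by simp
      ultimately show ?thesis using fst_mE[OF u] p3_def by (metis fst_conv nE_def)
    qed
  qed
  have xA: "x \<in> verts (A u)" using sgraph_edge[OF sA[OF u] ax(1)] by simp
  define S where "S = nbrs (A u) (a u) \<union> {a u, x}"
  define W where "W = verts (A u) - S"
  define P' where "P' = (W, {{y, z} | y z. {(u, y), (u, z)} \<in> edges P \<and> y \<in> W \<and> z \<in> W})"
  have yW: "y \<in> W \<Longrightarrow> y \<in> verts (A u) \<and> y \<noteq> a u \<and> y \<noteq> x \<and> y \<notin> nbrs (A u) (a u)" for y
    by (auto simp: W_def S_def)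
  have EP': "{y, z} \<in> edges P' \<longleftrightarrow> {(u, y), (u, z)} \<in> edges P \<and> y \<in> W \<and> z \<in> W" for y z
  proof
    assume "{y, z} \<in> edges P'"
    then obtain y' z' where h: "{y, z} = {y', z'}" "{(u, y'), (u, z')} \<in> edges P" "y' \<in> W" "z' \<in> W"
      by (auto simp: P'_def edges_def)
    then have "(y = y' \<and> z = z') \<or> (y = z' \<and> z = y')" by (simp add: doubleton_eq_iff)
    then show "{(u, y), (u, z)} \<in> edges P \<and> y \<in> W \<and> z \<in> W"
      using h by (auto simp: insert_commute)
  next
    assume "{(u, y), (u, z)} \<in> edges P \<and> y \<in> W \<and> z \<in> W"
    then show "{y, z} \<in> edges P'" by (auto simp: P'_def edges_def)
  qed
  have claim: "\<exists>z. q = (u, z) \<and> z \<in> W" if y: "y \<in> W" and q: "q \<in> nbrs P (u, y)" for y q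
  proof -
    have yC: "(u, y) \<in> C u" using yW[OF y] by (simp add: inC)
    have qC: "q \<in> C u"
    proof (rule ccontr)
      assume "q \<notin> C u"
      then obtain g where g: "g \<in> star B u" "(u, y) = nE u g" using cross_nbr[OF u yC q] by metis
      then have "y \<in> nbrs (A u) (a u)" using phi_in[OF u g(1)] by (simp add: nE_def)
      then show False using yW[OF y] by simp
    qed
    define z where "z = snd q"
    have qz: "q = (u, z)" using qC by (cases q) (simp add: inC z_def)
    have zA: "z \<in> verts (A u)" "z \<noteq> a u" using qC qz by (simp_all add: inC)
    have yq: "(u, y) \<in> nbrs P q" using q nbrs_sym by metis
    have "z \<noteq> x"
    proof
      assume "z = x"
      then have "q = r" using qz rx by simp
      then have "(u, y) = p3" using yq rleaf by simp
      then have "y = phi u f3" by (simp add: p3_def nE_def)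
      then show False using yW[OF y] phi_in[OF u f3p(2)] by simp
    qed
    moreover have "z \<notin> nbrs (A u) (a u)"
    proof
      assume "z \<in> nbrs (A u) (a u)"
      then obtain g where g: "g \<in> {f1, f2, f3}" "z = phi u g" using N by auto
      then have qg: "q = nE u g" using qz by (simp add: nE_def)
      have gs: "g \<in> star B u" using starK g by simp
      show False
      proof (cases "g = f3")
        case True
        then have "(u, y) \<in> nbrs P p3" using yq qg p3_def by simp
        moreover have "nbrs P p3 = {mE u f3, r}"
        proof -
          obtain x1 z1 where "x1 \<noteq> z1" "nbrs P p3 = {x1, z1}" using f3p(3) p3_def by (metis card_2_iff)
          then show ?thesis using m3 r by auto
        qed
        ultimately have "(u, y) = mE u f3 \<or> (u, y) = r" by simp
        then show False
        proof
          assume "(u, y) = mE u f3" then show False using fst_mE[OF u f3p(2)] by (metis fst_conv)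
        next
          assume "(u, y) = r" then show False using rx yW[OF y] by simp
        qed
      next
        case False
        then have "g \<in> {f1, f2}" using g by auto
        then have "nbrs P q = {mE u g}" using fileaf qg by simp
        then have "(u, y) = mE u g" using yq by simp
        then show False using fst_mE[OF u gs] by (metis fst_conv)
      qed
    qed
    ultimately have "z \<in> W" using zA by (simp add: W_def S_def)
    then show ?thesis using qz by blast
  qed
  have nbP': "nbrs P (u, y) = Pair u ` nbrs P' y" if y: "y \<in> W" for y
  proof (rule set_eqI, rule iffI)
    fix q assume q: "q \<in> nbrs P (u, y)"
    obtain z where z: "q = (u, z)" "z \<in> W" using claim[OF y q] by blast
    then have "{y, z} \<in> edges P'" using EP' q y by (simp add: nbrs_def)
    then show "q \<in> Pair u ` nbrs P' y" using z by (simp add: nbrs_def)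
  next
    fix q assume "q \<in> Pair u ` nbrs P' y"
    then obtain z where "q = (u, z)" "{y, z} \<in> edges P'" by (auto simp: nbrs_def)
    then show "q \<in> nbrs P (u, y)" using EP' by (simp add: nbrs_def)
  qed
  have cardP': "card (nbrs P' y) = card (nbrs P (u, y))" if y: "y \<in> W" for y
  proof -
    have "inj_on (Pair u) (nbrs P' y)" by (simp add: inj_on_def)
    then show ?thesis using nbP'[OF y] by (simp add: card_image)
  qed
  have "lambda_factor (delete (A u) S) P'"
    unfolding lf_iff[OF graph_delete[OF gA[OF u]]]
  proof (intro conjI)
    show "verts P' = verts (delete (A u) S)" by (simp add: P'_def W_def delete_def verts_def)
    show "edges P' \<subseteq> edges (delete (A u) S)"
    proof
      fix e assume e: "e \<in> edges P'"
      then obtain y z where yz: "e = {y, z}" "{(u, y), (u, z)} \<in> edges P" "y \<in> W" "z \<in> W"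
        by (auto simp: P'_def edges_def)
      then have "{y, z} \<in> edges (A u)" using PE edge_same by blast
      moreover have "{y, z} \<inter> S = {}" using yz by (auto simp: W_def)
      ultimately show "e \<in> edges (delete (A u) S)" using yz by (simp add: delete_def edges_def)
    qed
    show "loc P'" unfolding loc_def
    proof (intro conjI ballI allI impI)
      fix y assume "y \<in> verts P'"
      then have y: "y \<in> W" by (simp add: P'_def verts_def)
      then have "(u, y) \<in> verts P" using yW[OF y] CG[OF u] PV by (auto simp: inC)
      then show "card (nbrs P' y) = 1 \<or> card (nbrs P' y) = 2" using locV cardP'[OF y] by simp
    next
      fix y z assume "{y, z} \<in> edges P'"
      then have "{(u, y), (u, z)} \<in> edges P" "y \<in> W" "z \<in> W" using EP' by blast+
      then show "(card (nbrs P' y) = 2) = (card (nbrs P' z) \<noteq> 2)" using locE cardP' by simp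
    qed
  qed
  then have "has_lambda_factor (delete (A u) S)" unfolding has_lambda_factor_def by blast
  moreover have "x \<in> verts (A u) - (nbrs (A u) (a u) \<union> {a u})" using xA xN ax(2) by simp
  moreover have "\<exists>y\<in>nbrs (A u) (a u). {x, y} \<in> edges (A u)"
    using ax(1) phi_in[OF u f3p(2)] by (metis insert_commute)
  ultimately show False using h1 S_def by blast
qed


lemma nbrs2:
  assumes "card (nbrs P p) = 2" "q \<in> nbrs P p"
  obtains r where "r \<noteq> q" "nbrs P p = {q, r}"
proof -
  obtain x z where "x \<noteq> z" "nbrs P p = {x, z}" using assms(1) by (metis card_2_iff)
  then show ?thesis using that assms(2) by (metis doubleton_eq_iff insertE singletonD)
qed

lemma oth_eq:
  assumes u: "u \<in> verts B" and f: "f \<in> star B u" and g: "g \<in> star B u" and "oth u f = oth u g"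
  shows "f = g"
  using star_B[OF u f] star_B[OF u g] assms(4) by metis

lemma mE_inj: "u \<in> verts B \<Longrightarrow> f \<in> star B u \<Longrightarrow> g \<in> star B u \<Longrightarrow> mE u f = mE u g \<Longrightarrow> f = g"
  using oth_eq by (simp add: mE_def)

lemma aE_inj: "w \<in> verts B \<Longrightarrow> f \<in> star B w \<Longrightarrow> g \<in> star B w \<Longrightarrow> aE f = aE g \<Longrightarrow> f = g"
proof -
  assume w: "w \<in> verts B" and f: "f \<in> star B w" and g: "g \<in> star B w" and e: "aE f = aE g"
  have "nE w f \<in> aE f" using aE_star[OF w f] by simp
  then have "nE w f \<in> aE g" using e by simp
  then have "nE w f = nE w g \<or> nE w f = mE w g" using aE_star[OF w g] by simp
  then show "f = g"
  proof
    assume "nE w f = nE w g" then show ?thesis using nE_inj[OF w f g] by simp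
  next
    assume "nE w f = mE w g" then show ?thesis using fst_mE[OF w g] fst_mE[OF w f] by metis
  qed
qed

lemma compC:
  assumes u: "u \<in> verts B" and f: "f \<in> Kp u"
  shows "card (verts (component P (nE u f)) \<inter> C u) = 1 \<longleftrightarrow> card (nbrs P (nE u f)) = 1"
proof -
  have fs: "f \<in> star B u" using f by (simp add: Kp_def)
  have pC: "nE u f \<in> C u" by (rule nE_in[OF u fs])
  have m: "mE u f \<in> nbrs P (nE u f)" by (rule mE_nbr[OF u f])
  have "nE u f \<in> verts P" using pC CG[OF u] PV by blast
  then consider (leaf) "card (nbrs P (nE u f)) = 1" | (center) "card (nbrs P (nE u f)) = 2"
    using locV by blast
  then show ?thesis
  proof cases
    case leaf
    have cl: "card (nbrs P (mE u f)) = 2 \<and> verts (component P (nE u f)) = insert (mE u f) (nbrs P (mE u f))"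
      by (rule comp_leaf[OF sP locP leaf m])
    have "verts (component P (nE u f)) \<inter> C u = {nE u f}"
    proof (rule set_eqI, rule iffI)
      fix q assume q: "q \<in> verts (component P (nE u f)) \<inter> C u"
      have "q \<noteq> mE u f" using q mE_notC[OF u fs] by blast
      then have qn: "q \<in> nbrs P (mE u f)" using q cl by blast
      then have "mE u f \<in> nbrs P q" using nbrs_sym by metis
      then obtain g where g: "g \<in> star B u" "q = nE u g" "mE u f = mE u g"
        using cross_nbr[OF u _ _ mE_notC[OF u fs]] q by blast
      then show "q \<in> {nE u f}" using mE_inj[OF u fs g(1)] by simp
    next
      fix q assume q: "q \<in> {nE u f}"
      have "nE u f \<in> nbrs P (mE u f)" using m nbrs_sym by metis
      then show "q \<in> verts (component P (nE u f)) \<inter> C u" using pC cl q by simp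
    qed
    then show ?thesis using leaf by simp
  next
    case center
    obtain r where r: "r \<noteq> mE u f" "nbrs P (nE u f) = {mE u f, r}" using nbrs2[OF center m] by blast
    have rC: "r \<in> C u"
    proof (rule ccontr)
      assume "r \<notin> C u"
      then obtain g where g: "g \<in> star B u" "nE u f = nE u g" "r = mE u g"
        using cross_nbr[OF u pC, of r] r by blast
      then show False using nE_inj[OF u fs g(1)] r by simp
    qed
    have cv: "verts (component P (nE u f)) = insert (nE u f) (nbrs P (nE u f))"
      by (rule comp_center[OF sP locP center])
    have sub: "{nE u f, r} \<subseteq> verts (component P (nE u f)) \<inter> C u" using cv r pC rC by blast
    have "nE u f \<noteq> r" using r nbrs_irrefl[OF sP] by blast
    then have "card {nE u f, r} = 2" by simp
    moreover have "finite (verts (component P (nE u f)) \<inter> C u)" using finC[OF u] by simp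
    ultimately have "card (verts (component P (nE u f)) \<inter> C u) \<ge> 2" using sub card_mono by metis
    then show ?thesis using center by simp
  qed
qed

lemma ap_eq: "alpha_preimage B phi P = {f \<in> edges B. aE f \<in> edges P}"
proof (rule set_eqI, rule iffI)
  fix e assume "e \<in> alpha_preimage B phi P"
  then show "e \<in> {f \<in> edges B. aE f \<in> edges P}"
    unfolding alpha_preimage_def using alpha_eq by auto
next
  fix e assume e: "e \<in> {f \<in> edges B. aE f \<in> edges P}"
  obtain x y where xy: "e = {x, y}" using sgraph_edgeE[OF sB, of e] e by blast
  have "alpha phi x y \<in> Eprime B phi" using e xy unfolding Eprime_def by blast
  then show "e \<in> alpha_preimage B phi P" using e xy alpha_eq unfolding alpha_preimage_def by auto
qed

end

locale lfPh = lfP B A a phi P for B :: "'b graph" and A :: "'b \<Rightarrow> 'a graph" and a phi P +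
  assumes h1: "\<And>u x. u \<in> verts B \<Longrightarrow> x \<in> verts (A u) - (nbrs (A u) (a u) \<union> {a u}) \<Longrightarrow>
       (\<exists>y\<in>nbrs (A u) (a u). {x, y} \<in> edges (A u)) \<Longrightarrow>
       \<not> has_lambda_factor (delete (A u) (nbrs (A u) (a u) \<union> {a u, x}))"
begin

lemma Kst:
  assumes u: "u \<in> verts B"
  shows "(Kp u = Kin u \<and> card (Kp u) = 1 \<and> Kout u = {}) \<or> (Kp u = Kout u \<and> card (Kp u) = 2 \<and> Kin u = {})"
proof -
  have "\<not> (card (Kin u) = 2 \<and> card (Kout u) = 1)"
  proof
    assume c: "card (Kin u) = 2 \<and> card (Kout u) = 1"
    show False
    proof (rule no21[OF u _ conjunct1[OF c] conjunct2[OF c]])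
      fix x assume "x \<in> verts (A u) - (nbrs (A u) (a u) \<union> {a u})"
        "\<exists>y\<in>nbrs (A u) (a u). {x, y} \<in> edges (A u)"
      then show "\<not> has_lambda_factor (delete (A u) (nbrs (A u) (a u) \<union> {a u, x}))"
        using h1[OF u] by blast
    qed
  qed
  then have "(card (Kin u) = 1 \<and> card (Kout u) = 0) \<or> (card (Kin u) = 0 \<and> card (Kout u) = 2)"
    using Kcases[OF u] by blast
  then show ?thesis using Kp_split[OF u] fin_Kp[of u] by auto
qed

lemma Kp_card: "u \<in> verts B \<Longrightarrow> card (Kp u) = 1 \<or> card (Kp u) = 2"
  using Kst by blast

lemma center_iff:
  assumes u: "u \<in> verts B" and f: "f \<in> Kp u"
  shows "card (nbrs P (nE u f)) = 2 \<longleftrightarrow> card (Kp u) = 2"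
  using Kst[OF u] f by (auto simp: Kin_def Kout_def)

lemma Kp_oth:
  assumes u: "u \<in> verts B" and f: "f \<in> Kp u"
  shows "oth u f \<in> verts B \<and> f \<in> Kp (oth u f) \<and> nE (oth u f) f = mE u f \<and> oth (oth u f) f = u"
proof -
  have fs: "f \<in> star B u" using f by (simp add: Kp_def)
  have "oth u f \<in> verts B" using star_B[OF u fs] by simp
  moreover have "f \<in> star B (oth u f)" "oth (oth u f) f = u" using oth_mem[OF u fs] by auto
  ultimately show ?thesis using f mE_nE[OF u fs] by (simp add: Kp_def)
qed

lemma Kp_opp:
  assumes u: "u \<in> verts B" and f: "f \<in> Kp u"
  shows "(card (Kp u) = 2) = (card (Kp (oth u f)) \<noteq> 2)"
proof -
  have o: "oth u f \<in> verts B" "f \<in> Kp (oth u f)" "nE (oth u f) f = mE u f" using Kp_oth[OF u f] by auto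
  have "(card (nbrs P (nE u f)) = 2) = (card (nbrs P (mE u f)) \<noteq> 2)"
    using locE[OF Kp_edge[OF u f]] .
  then show ?thesis using center_iff[OF u f] center_iff[OF o(1) o(2)] o(3) by simp
qed

definition "Q' = (verts B, alpha_preimage B phi P)"

lemma Q'E: "edges Q' = {f \<in> edges B. aE f \<in> edges P}" by (simp add: Q'_def edges_def ap_eq)
lemma Q'V: "verts Q' = verts B" by (simp add: Q'_def verts_def)

lemma sQ': "sgraph Q'"
  using sB Q'E Q'V unfolding sgraph_def by auto

lemma starQ': "u \<in> verts B \<Longrightarrow> {e \<in> edges Q'. u \<in> e} = Kp u"
  by (auto simp: Q'E Kp_def star_def)

lemma degQ': "u \<in> verts B \<Longrightarrow> degree Q' u = card (Kp u)"
  using starQ' by (simp add: degree_def)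

lemma nbQ': "u \<in> verts B \<Longrightarrow> card (nbrs Q' u) = card (Kp u)"
  using degQ' degree_nbrs[OF sQ'] by simp

lemma a1_lf: "lambda_factor B Q'"
  unfolding lf_iff[OF gB]
proof (intro conjI)
  show "verts Q' = verts B" by (rule Q'V)
  show "edges Q' \<subseteq> edges B" using Q'E by auto
  show "loc Q'" unfolding loc_def
  proof (intro conjI ballI allI impI)
    fix v assume "v \<in> verts Q'"
    then have v: "v \<in> verts B" using Q'V by simp
    then show "card (nbrs Q' v) = 1 \<or> card (nbrs Q' v) = 2" using nbQ' Kp_card by simp
  next
    fix v w assume e: "{v, w} \<in> edges Q'"
    then have vw: "v \<noteq> w" "v \<in> verts B" using sgraph_edge[OF sQ' e] Q'V by auto
    have f: "{v, w} \<in> Kp v" using starQ'[OF vw(2)] e by blast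
    have "oth v {v, w} = w" using oth[OF vw(1)] .
    moreover have "w \<in> verts B" using sgraph_edge[OF sQ' e] Q'V by auto
    ultimately show "(card (nbrs Q' v) = 2) = (card (nbrs Q' w) \<noteq> 2)"
      using Kp_opp[OF vw(2) f] nbQ' vw(2) by simp
  qed
qed

lemma a1_F: "Fvec B A a phi P = difactor Q'"
proof (rule set_eqI)
  fix x
  obtain u v :: 'b where x: "x = (u, v)" by (cases x)
  have "(u, v) \<in> Fvec B A a phi P \<longleftrightarrow> (u, v) \<in> difactor Q'"
  proof
    assume "(u, v) \<in> Fvec B A a phi P"
    then have h: "{u, v} \<in> edges B" "aE {u, v} \<in> edges P"
      "card (verts (component P (u, phi u {u, v})) \<inter> C u) = 1"
      by (auto simp: Fvec_def alpha_eq)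
    have uv: "u \<noteq> v" "u \<in> verts B" "v \<in> verts B" using sgraph_edge[OF sB h(1)] by auto
    have f: "{u, v} \<in> Kp u" using h uv by (simp add: Kp_def star_def)
    have "card (nbrs P (nE u {u, v})) = 1" using compC[OF uv(2) f] h(3) by (simp add: nE_def)
    then have "card (Kp u) \<noteq> 2" using center_iff[OF uv(2) f] by simp
    then have "card (Kp v) = 2" using Kp_opp[OF uv(2) f] oth[OF uv(1)] by simp
    then show "(u, v) \<in> difactor Q'" using h degQ'[OF uv(3)] by (simp add: difactor_def Q'E)
  next
    assume "(u, v) \<in> difactor Q'"
    then have h: "{u, v} \<in> edges B" "aE {u, v} \<in> edges P" "degree Q' v = 2"
      by (auto simp: difactor_def Q'E)
    have uv: "u \<noteq> v" "u \<in> verts B" "v \<in> verts B" using sgraph_edge[OF sB h(1)] by auto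
    have f: "{u, v} \<in> Kp u" using h uv by (simp add: Kp_def star_def)
    have "card (Kp v) = 2" using h(3) degQ'[OF uv(3)] by simp
    then have "card (Kp u) \<noteq> 2" using Kp_opp[OF uv(2) f] oth[OF uv(1)] by simp
    then have "card (nbrs P (nE u {u, v})) \<noteq> 2" using center_iff[OF uv(2) f] by simp
    moreover have "nE u {u, v} \<in> verts P" using nE_in[OF uv(2)] f CG[OF uv(2)] PV by (auto simp: Kp_def)
    ultimately have "card (nbrs P (nE u {u, v})) = 1" using locV by blast
    then have "card (verts (component P (u, phi u {u, v})) \<inter> C u) = 1"
      using compC[OF uv(2) f] by (simp add: nE_def)
    then show "(u, v) \<in> Fvec B A a phi P" using h by (simp add: Fvec_def alpha_eq)
  qed
  then show "x \<in> Fvec B A a phi P \<longleftrightarrow> x \<in> difactor Q'" using x by simp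
qed

lemma star_cut_card:
  assumes w: "w \<in> verts B"
  shows "card (aE ` star B w \<inter> edges P) = 1 \<or> card (aE ` star B w \<inter> edges P) = 2"
proof -
  have "aE ` star B w \<inter> edges P = aE ` Kp w" by (auto simp: Kp_def)
  moreover have "inj_on aE (Kp w)" using aE_inj[OF w] by (auto simp: inj_on_def Kp_def)
  ultimately have "card (aE ` star B w \<inter> edges P) = card (Kp w)" by (simp add: card_image)
  then show ?thesis using Kp_card[OF w] by simp
qed

end

definition nb :: "'a set set \<Rightarrow> 'a \<Rightarrow> 'a set" where "nb E y = {z. {y, z} \<in> E}"

lemma nb_nbrs: "nbrs H y = nb (edges H) y" by (simp add: nbrs_def nb_def)

context setting
begin

definition dH :: "'b \<Rightarrow> 'a set set \<Rightarrow> 'b set set \<Rightarrow> 'a \<Rightarrow> nat" where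
  "dH u H Qs y = card (nb H y) + (if y \<in> phi u ` Qs then 1 else 0)"

definition Hok :: "'b \<Rightarrow> 'b set set \<Rightarrow> 'a set set \<Rightarrow> bool" where
  "Hok u Qs H \<longleftrightarrow> H \<subseteq> edges (delete (A u) {a u}) \<and>
    (\<forall>y\<in>verts (A u) - {a u}. dH u H Qs y = 1 \<or> dH u H Qs y = 2) \<and>
    (\<forall>y z. {y, z} \<in> H \<longrightarrow> (dH u H Qs y = 2) = (dH u H Qs z \<noteq> 2)) \<and>
    (\<forall>f\<in>Qs. (dH u H Qs (phi u f) = 2) = (card Qs = 2))"

lemma cardA3: "u \<in> verts B \<Longrightarrow> y \<in> verts (A u) \<Longrightarrow> card (nbrs (A u) y) = 3"
  using A degree_nbrs[OF sA] by (simp add: cubic_def)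

lemma cardA8: "u \<in> verts B \<Longrightarrow> card (verts (A u)) \<ge> 8"
proof -
  assume u: "u \<in> verts B"
  have "card (verts (A u)) \<ge> 4" using A[OF u] by (simp add: three_connected_def)
  moreover have "card (verts (A u)) mod 6 = 2" using hA[OF u] .
  ultimately show ?thesis by presburger
qed

lemma pick_w:
  assumes u: "u \<in> verts B" and y: "y1 \<noteq> y2" "y1 \<in> nbrs (A u) (a u)" "y2 \<in> nbrs (A u) (a u)"
  shows "\<exists>w1 w2. w1 \<in> nbrs (A u) y1 \<and> w2 \<in> nbrs (A u) y2 \<and> w1 \<notin> {a u, y2} \<and> w2 \<notin> {a u, y1, w1}"
proof -
  have sa: "sgraph (A u)" by (rule sA[OF u])
  have yv: "y1 \<in> verts (A u)" "y2 \<in> verts (A u)" "y1 \<noteq> a u" "y2 \<noteq> a u"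
    using y nbrs_sub[OF sa] nbrs_irrefl[OF sa] by blast+
  have fin: "finite (nbrs (A u) z)" for z using finite_subset[OF nbrs_sub[OF sa] finA[OF u]] .
  have c1: "card (nbrs (A u) y1) = 3" "card (nbrs (A u) y2) = 3" using cardA3[OF u] yv by auto
  have "nbrs (A u) y1 - {a u, y2} \<noteq> {}"
  proof
    assume "nbrs (A u) y1 - {a u, y2} = {}"
    then have "nbrs (A u) y1 \<subseteq> {a u, y2}" by blast
    then have "card (nbrs (A u) y1) \<le> card {a u, y2}" by (simp add: card_mono)
    also have "\<dots> \<le> 2" by (simp add: card_insert_if)
    finally have "card (nbrs (A u) y1) \<le> 2" .
    then show False using c1 by simp
  qed
  then obtain w1 where w1: "w1 \<in> nbrs (A u) y1" "w1 \<notin> {a u, y2}" by blast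
  have "nbrs (A u) y2 - {a u, y1, w1} \<noteq> {}"
  proof
    assume "nbrs (A u) y2 - {a u, y1, w1} = {}"
    then have sub2: "nbrs (A u) y2 \<subseteq> {a u, y1, w1}" by blast
    have "card {a u, y1, w1} \<le> 3" by (simp add: card_insert_if)
    moreover have "card (nbrs (A u) y2) \<le> card {a u, y1, w1}" using sub2 by (simp add: card_mono)
    ultimately have "card {a u, y1, w1} = card (nbrs (A u) y2)" using c1 by simp
    then have n2: "nbrs (A u) y2 = {a u, y1, w1}"
      using card_subset_eq[OF _ sub2] by simp
    then have "y2 \<in> nbrs (A u) y1" using nbrs_sym by (metis insertCI)
    moreover have "a u \<in> nbrs (A u) y1" using y(2) nbrs_sym by metis
    ultimately have sub1: "{a u, y2, w1} \<subseteq> nbrs (A u) y1" using w1 by blast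
    have "card {a u, y2, w1} = 3" using yv(4) w1(2) by (auto simp: card_insert_if)
    then have n1: "nbrs (A u) y1 = {a u, y2, w1}" using card_subset_eq[OF fin sub1] c1 by simp
    define S where "S = {a u, w1}"
    have Ssub: "S \<subseteq> verts (A u)" "card S \<le> 2"
      using aA[OF u] w1 nbrs_sub[OF sa] by (auto simp: S_def card_insert_if)
    then have conn: "connected (delete (A u) S)" using A[OF u] by (simp add: three_connected_def)
    have "\<not> verts (A u) \<subseteq> {a u, w1, y1, y2}"
    proof
      assume "verts (A u) \<subseteq> {a u, w1, y1, y2}"
      then have "card (verts (A u)) \<le> card {a u, w1, y1, y2}" by (simp add: card_mono)
      also have "\<dots> \<le> 4" by (simp add: card_insert_if)
      finally show False using cardA8[OF u] by simp
    qed
    then obtain z where z: "z \<in> verts (A u)" "z \<notin> {a u, w1, y1, y2}" by blast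
    have "y1 \<in> verts (delete (A u) S)" "z \<in> verts (delete (A u) S)"
      using yv z w1 nbrs_irrefl[OF sa, of y1] by (auto simp: S_def delete_def verts_def)
    then have "reach (delete (A u) S) y1 z" using conn by (simp add: connected_def)
    then have "z \<in> {y1, y2}"
    proof (rule reach_closed)
      fix p q assume p: "p \<in> {y1, y2}" and e: "{p, q} \<in> edges (delete (A u) S)"
      then have "{p, q} \<in> edges (A u)" "q \<notin> S" by (auto simp: delete_def edges_def)
      then have "q \<in> nbrs (A u) p" "q \<notin> S" by (auto simp: nbrs_def)
      then show "q \<in> {y1, y2}" using p n1 n2 by (auto simp: S_def)
    qed simp
    then show False using z by simp
  qed
  then obtain w2 where "w2 \<in> nbrs (A u) y2" "w2 \<notin> {a u, y1, w1}" by blast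
  then show ?thesis using w1 by blast
qed


lemma lf_parts:
  assumes g: "graph D" and F: "lambda_factor D F"
  shows "verts F = verts D" "edges F \<subseteq> edges D" "loc F" "sgraph F"
proof -
  show v: "verts F = verts D" and e: "edges F \<subseteq> edges D" and "loc F" using F lf_iff[OF g] by auto
  show "sgraph F" using graph_sgraph[OF g] v e unfolding sgraph_def by (metis subsetD)
qed

lemma locV': "loc F \<Longrightarrow> p \<in> verts F \<Longrightarrow> card (nbrs F p) = 1 \<or> card (nbrs F p) = 2"
  unfolding loc_def by blast
lemma locE': "loc F \<Longrightarrow> {p, q} \<in> edges F \<Longrightarrow> (card (nbrs F p) = 2) = (card (nbrs F q) \<noteq> 2)"
  unfolding loc_def by blast

lemma nbrs_out: "sgraph F \<Longrightarrow> x \<notin> verts F \<Longrightarrow> nbrs F x = {}"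
  unfolding nbrs_def using sgraph_edge by fastforce

lemma local_leaf:
  assumes u: "u \<in> verts B" and f: "f \<in> star B u"
    and h2: "has_lambda_factor (delete (A u) {a u, phi u f})"
  shows "\<exists>H. Hok u {f} H"
proof -
  define x where "x = phi u f"
  have xi: "x \<in> nbrs (A u) (a u)" "x \<in> verts (A u)" "x \<noteq> a u" using phi_in[OF u f] x_def by auto
  define D where "D = delete (A u) {a u, x}"
  obtain F where F: "lambda_factor D F" using h2 x_def D_def by (auto simp: has_lambda_factor_def)
  have gD: "graph D" using graph_delete[OF gA[OF u]] D_def by simp
  note Fp = lf_parts[OF gD F]
  have vF: "verts F = verts (A u) - {a u, x}" using Fp(1) by (simp add: D_def delete_def verts_def)
  have eF: "e \<in> edges (A u) \<and> e \<inter> {a u, x} = {}" if "e \<in> edges F" for e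
    using that Fp(2) by (auto simp: D_def delete_def edges_def)
  have d: "dH u (edges F) {f} y = card (nbrs F y) + (if y = x then 1 else 0)" for y
    by (simp add: dH_def nb_nbrs x_def)
  have nx: "nbrs F x = {}" using nbrs_out[OF Fp(4)] vF by auto
  show ?thesis unfolding Hok_def
  proof (intro exI[of _ "edges F"] conjI ballI allI impI)
    show "edges F \<subseteq> edges (delete (A u) {a u})"
      using eF by (auto simp: delete_def edges_def)
  next
    fix y assume y: "y \<in> verts (A u) - {a u}"
    show "dH u (edges F) {f} y = 1 \<or> dH u (edges F) {f} y = 2"
    proof (cases "y = x")
      case True then show ?thesis using d nx by simp
    next
      case False
      then have "y \<in> verts F" using vF y by simp
      then show ?thesis using locV'[OF Fp(3)] d False by simp
    qed
  next
    fix y z assume e: "{y, z} \<in> edges F"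
    then have "y \<in> verts F" "z \<in> verts F" using sgraph_edge[OF Fp(4) e] by auto
    then have "y \<noteq> x" "z \<noteq> x" using vF by auto
    then show "(dH u (edges F) {f} y = 2) = (dH u (edges F) {f} z \<noteq> 2)"
      using locE'[OF Fp(3) e] d by simp
  next
    fix g assume "g \<in> {f}"
    then show "(dH u (edges F) {f} (phi u g) = 2) = (card {f} = 2)" using d nx x_def by simp
  qed
qed

lemma local_center:
  assumes u: "u \<in> verts B" and f: "f1 \<in> star B u" "f2 \<in> star B u" "f1 \<noteq> f2"
    and h3: "\<And>w1 w2 w4 w5. distinct [w1, w2, a u, w4, w5] \<Longrightarrow>
       {w1, w2} \<in> edges (A u) \<Longrightarrow> {w2, a u} \<in> edges (A u) \<Longrightarrow>
       {a u, w4} \<in> edges (A u) \<Longrightarrow> {w4, w5} \<in> edges (A u) \<Longrightarrow>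
       has_lambda_factor (delete (A u) {w1, w2, a u, w4, w5})"
  shows "\<exists>H. Hok u {f1, f2} H"
proof -
  define y1 where "y1 = phi u f1"
  define y2 where "y2 = phi u f2"
  have sa: "sgraph (A u)" by (rule sA[OF u])
  have yi: "y1 \<in> nbrs (A u) (a u)" "y2 \<in> nbrs (A u) (a u)" "y1 \<noteq> a u" "y2 \<noteq> a u"
    using phi_in[OF u f(1)] phi_in[OF u f(2)] y1_def y2_def by auto
  have y12: "y1 \<noteq> y2" using phi_inj[OF u f(1) f(2)] f(3) y1_def y2_def by blast
  obtain w1 w2 where w: "w1 \<in> nbrs (A u) y1" "w2 \<in> nbrs (A u) y2" "w1 \<notin> {a u, y2}" "w2 \<notin> {a u, y1, w1}"
    using pick_w[OF u y12 yi(1) yi(2)] by blast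
  have wy: "w1 \<noteq> y1" "w2 \<noteq> y2" using w nbrs_irrefl[OF sa] by blast+
  have ed: "{y1, w1} \<in> edges (A u)" "{y2, w2} \<in> edges (A u)" "{a u, y1} \<in> edges (A u)" "{a u, y2} \<in> edges (A u)"
    using w yi by (auto simp: nbrs_def)
  have "has_lambda_factor (delete (A u) {w1, y1, a u, y2, w2})"
  proof (rule h3)
    show "distinct [w1, y1, a u, y2, w2]" using w wy yi y12 by auto
    show "{w1, y1} \<in> edges (A u)" using ed by (simp add: insert_commute)
    show "{y1, a u} \<in> edges (A u)" using ed by (simp add: insert_commute)
    show "{a u, y2} \<in> edges (A u)" using ed by simp
    show "{y2, w2} \<in> edges (A u)" using ed by simp
  qed
  then obtain F where F: "lambda_factor (delete (A u) {w1, y1, a u, y2, w2}) F"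
    by (auto simp: has_lambda_factor_def)
  define D where "D = delete (A u) {w1, y1, a u, y2, w2}"
  have gD: "graph D" using graph_delete[OF gA[OF u]] D_def by simp
  note Fp = lf_parts[OF gD F[folded D_def]]
  define R where "R = {w1, y1, a u, y2, w2}"
  have vF: "verts F = verts (A u) - R" using Fp(1) by (simp add: D_def R_def delete_def verts_def)
  have eF: "e \<in> edges (A u) \<and> e \<inter> R = {}" if "e \<in> edges F" for e
    using that Fp(2) by (auto simp: D_def R_def delete_def edges_def)
  define H where "H = edges F \<union> {{y1, w1}, {y2, w2}}"
  have nR: "nbrs F y = {}" if "y \<in> R" for y using nbrs_out[OF Fp(4)] vF that by auto
  have Fnb: "nb (edges F) y \<inter> R = {}" for y
  proof -
    have "nb (edges F) y \<subseteq> verts F" using nbrs_sub[OF Fp(4)] by (simp add: nb_nbrs)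
    then show ?thesis using vF by auto
  qed
  have nbH: "nb H y = nb (edges F) y \<union> (if y = y1 then {w1} else {}) \<union> (if y = w1 then {y1} else {})
      \<union> (if y = y2 then {w2} else {}) \<union> (if y = w2 then {y2} else {})" for y
    by (auto simp: nb_def H_def doubleton_eq_iff)
  have img: "phi u ` {f1, f2} = {y1, y2}" by (simp add: y1_def y2_def)
  have dout: "dH u H {f1, f2} y = card (nbrs F y)" if "y \<notin> R" for y
  proof -
    have "nb H y = nb (edges F) y" using nbH[of y] that by (simp add: R_def)
    moreover have "y \<notin> {y1, y2}" using that by (simp add: R_def)
    ultimately show ?thesis unfolding dH_def img by (simp add: nb_nbrs)
  qed
  have Rdist: "y1 \<noteq> w1" "y1 \<noteq> y2" "y1 \<noteq> w2" "w1 \<noteq> y2" "w1 \<noteq> w2" "y2 \<noteq> w2"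
    using w wy y12 by auto
  have dy1: "dH u H {f1, f2} y1 = 2"
  proof -
    have "nb H y1 = {w1}" using nbH[of y1] nR[of y1] Rdist by (simp add: R_def nb_nbrs)
    then show ?thesis unfolding dH_def img by simp
  qed
  have dy2: "dH u H {f1, f2} y2 = 2"
  proof -
    have "nb H y2 = {w2}" using nbH[of y2] nR[of y2] Rdist by (simp add: R_def nb_nbrs)
    then show ?thesis unfolding dH_def img by simp
  qed
  have dw1: "dH u H {f1, f2} w1 = 1"
  proof -
    have "nb H w1 = {y1}" using nbH[of w1] nR[of w1] Rdist by (simp add: R_def nb_nbrs)
    then show ?thesis using Rdist w unfolding dH_def img by simp
  qed
  have dw2: "dH u H {f1, f2} w2 = 1"
  proof -
    have "nb H w2 = {y2}" using nbH[of w2] nR[of w2] Rdist by (simp add: R_def nb_nbrs)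
    then show ?thesis using Rdist w unfolding dH_def img by simp
  qed
  show ?thesis unfolding Hok_def
  proof (intro exI[of _ H] conjI ballI allI impI)
    show "H \<subseteq> edges (delete (A u) {a u})"
      using eF ed w yi by (auto simp: H_def R_def delete_def edges_def)
  next
    fix y assume y: "y \<in> verts (A u) - {a u}"
    show "dH u H {f1, f2} y = 1 \<or> dH u H {f1, f2} y = 2"
    proof (cases "y \<in> R")
      case True
      then have "y = w1 \<or> y = y1 \<or> y = y2 \<or> y = w2" using y by (auto simp: R_def)
      then show ?thesis using dy1 dy2 dw1 dw2 by auto
    next
      case False
      then have "y \<in> verts F" using vF y by simp
      then show ?thesis using locV'[OF Fp(3)] dout False by simp
    qed
  next
    fix y z assume e: "{y, z} \<in> H"
    show "(dH u H {f1, f2} y = 2) = (dH u H {f1, f2} z \<noteq> 2)"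
    proof (cases "{y, z} \<in> edges F")
      case True
      then have "y \<notin> R" "z \<notin> R" using eF by auto
      then show ?thesis using locE'[OF Fp(3) True] dout by simp
    next
      case False
      then have "{y, z} = {y1, w1} \<or> {y, z} = {y2, w2}" using e by (simp add: H_def)
      then have "(y = y1 \<and> z = w1) \<or> (y = w1 \<and> z = y1) \<or> (y = y2 \<and> z = w2) \<or> (y = w2 \<and> z = y2)"
        by (auto simp: doubleton_eq_iff)
      then show ?thesis using dy1 dy2 dw1 dw2 by auto
    qed
  next
    fix g assume "g \<in> {f1, f2}"
    then have "phi u g = y1 \<or> phi u g = y2" using y1_def y2_def by auto
    then show "(dH u H {f1, f2} (phi u g) = 2) = (card {f1, f2} = 2)" using dy1 dy2 f(3) by auto
  qed
qed


lemma fst_aE: "fst ` aE f = f"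
  by (force simp: aE_def image_image)

lemma a3:
  assumes h2: "\<And>u z. u \<in> verts B \<Longrightarrow> {a u, z} \<in> edges (A u) \<Longrightarrow>
       has_lambda_factor (delete (A u) {a u, z})"
    and h3: "\<And>u w1 w2 w4 w5. u \<in> verts B \<Longrightarrow> distinct [w1, w2, a u, w4, w5] \<Longrightarrow>
       {w1, w2} \<in> edges (A u) \<Longrightarrow> {w2, a u} \<in> edges (A u) \<Longrightarrow>
       {a u, w4} \<in> edges (A u) \<Longrightarrow> {w4, w5} \<in> edges (A u) \<Longrightarrow>
       has_lambda_factor (delete (A u) {w1, w2, a u, w4, w5})"
    and Q: "lambda_factor B Q"
  shows "\<exists>P. lambda_factor G P \<and> Fvec B A a phi P = difactor Q"
proof -
  note Qp = lf_parts[OF gB Q]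
  define Qs where "Qs u = {e \<in> edges Q. u \<in> e}" for u
  have cQs: "card (Qs u) = card (nbrs Q u)" for u
    using degree_nbrs[OF Qp(4)] by (simp add: degree_def Qs_def)
  have cQs12: "card (Qs u) = 1 \<or> card (Qs u) = 2" if "u \<in> verts B" for u
    using locV'[OF Qp(3)] Qp(1) that cQs by simp
  have Qs_star: "Qs u \<subseteq> star B u" for u using Qp(2) by (auto simp: Qs_def star_def)
  have "\<forall>u\<in>verts B. \<exists>H. Hok u (Qs u) H"
  proof
    fix u assume u: "u \<in> verts B"
    consider "card (Qs u) = 1" | "card (Qs u) = 2" using cQs12[OF u] by blast
    then show "\<exists>H. Hok u (Qs u) H"
    proof cases
      case 1
      then obtain f where f: "Qs u = {f}" by (metis card_1_singletonE)
      then have fs: "f \<in> star B u" using Qs_star by blast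
      have "phi u f \<in> nbrs (A u) (a u)" using phi_in[OF u fs] by simp
      then have "{a u, phi u f} \<in> edges (A u)" by (simp add: nbrs_def)
      then show ?thesis using local_leaf[OF u fs h2[OF u]] f by simp
    next
      case 2
      then obtain f1 f2 where f: "f1 \<noteq> f2" "Qs u = {f1, f2}" by (metis card_2_iff)
      then have fs: "f1 \<in> star B u" "f2 \<in> star B u" using Qs_star by blast+
      show ?thesis using local_center[OF u fs f(1) h3[OF u]] f by simp
    qed
  qed
  then obtain Hf where Hf: "\<And>u. u \<in> verts B \<Longrightarrow> Hok u (Qs u) (Hf u)" by metis
  have Hsub: "Hf u \<subseteq> edges (delete (A u) {a u})" if "u \<in> verts B" for u
    using Hf[OF that] by (simp add: Hok_def)
  define E1 where "E1 = {Pair u ` e | u e. u \<in> verts B \<and> e \<in> Hf u}"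
  define P where "P = (verts G, E1 \<union> aE ` edges Q)"
  have PV: "verts P = verts G" and PE: "edges P = E1 \<union> aE ` edges Q"
    by (simp_all add: P_def verts_def edges_def)
  have Hedge: "\<exists>p1 p2. e = {p1, p2} \<and> {p1, p2} \<in> edges (A u) \<and> p1 \<noteq> a u \<and> p2 \<noteq> a u"
    if u: "u \<in> verts B" and e: "e \<in> Hf u" for u e
  proof -
    have "e \<in> edges (A u)" "a u \<notin> e" using Hsub[OF u] e by (auto simp: delete_def edges_def)
    moreover obtain p1 p2 where "e = {p1, p2}" using sgraph_edgeE[OF sA[OF u]] \<open>e \<in> edges (A u)\<close> by metis
    ultimately show ?thesis by blast
  qed
  have nbP: "nbrs P (u, y) = Pair u ` nb (Hf u) y \<union> (\<lambda>f. mE u f) ` {f \<in> Qs u. phi u f = y}"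
    if u: "u \<in> verts B" for u y
  proof (rule set_eqI, rule iffI)
    fix q assume "q \<in> nbrs P (u, y)"
    then have "{(u, y), q} \<in> E1 \<union> aE ` edges Q" using PE by (simp add: nbrs_def)
    then consider (e1) u' e where "u' \<in> verts B" "e \<in> Hf u'" "{(u, y), q} = Pair u' ` e"
      | (e2) f where "f \<in> edges Q" "{(u, y), q} = aE f" by (auto simp: E1_def)
    then show "q \<in> Pair u ` nb (Hf u) y \<union> (\<lambda>f. mE u f) ` {f \<in> Qs u. phi u f = y}"
    proof cases
      case e1
      have "fst ` {(u, y), q} = fst ` Pair u' ` e" using e1(3) by simp
      moreover have "e \<noteq> {}" using Hedge[OF e1(1,2)] by auto
      ultimately have "fst ` {(u, y), q} = {u'}" by (auto simp: image_image)
      then have uu: "u' = u" "fst q = u" by auto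
      have "snd ` {(u, y), q} = snd ` Pair u' ` e" using e1(3) by simp
      then have ee: "e = {y, snd q}" by (simp add: image_image)
      have "q = (u, snd q)" using uu by (cases q) simp
      moreover have "snd q \<in> nb (Hf u) y" using e1(2) ee uu by (simp add: nb_def)
      ultimately show ?thesis by blast
    next
      case e2
      have fs: "f \<in> star B u" and fQ: "f \<in> Qs u"
      proof -
        have "(u, y) \<in> aE f" using e2(2) by blast
        then have "u \<in> f" "y = phi u f" by (auto simp: aE_def)
        then show "f \<in> star B u" "f \<in> Qs u" using e2(1) Qp(2) by (auto simp: star_def Qs_def)
      qed
      have uy: "(u, y) \<in> aE f" using e2(2) by blast
      then have y: "y = phi u f" by (auto simp: aE_def)
      have ae: "aE f = {nE u f, mE u f}" by (rule aE_star[OF u fs])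
      have "q \<in> aE f" using e2(2) by blast
      moreover have "q \<noteq> nE u f"
      proof
        assume "q = nE u f"
        then have "aE f = {nE u f}" using e2(2) y by (simp add: nE_def)
        then have "mE u f = nE u f" using ae by auto
        then show False using fst_mE[OF u fs] by metis
      qed
      ultimately have "q = mE u f" using ae by simp
      then show ?thesis using fQ y by blast
    qed
  next
    fix q assume "q \<in> Pair u ` nb (Hf u) y \<union> (\<lambda>f. mE u f) ` {f \<in> Qs u. phi u f = y}"
    then consider (a) t where "t \<in> nb (Hf u) y" "q = (u, t)" | (b) f where "f \<in> Qs u" "phi u f = y" "q = mE u f"
      by blast
    then show "q \<in> nbrs P (u, y)"
    proof cases
      case a
      have "{y, t} \<in> Hf u" using a by (simp add: nb_def)
      then have "Pair u ` {y, t} \<in> E1" unfolding E1_def using u by blast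
      then have "{(u, y), (u, t)} \<in> edges P" using PE by simp
      then show ?thesis using a by (simp add: nbrs_def)
    next
      case b
      then have fs: "f \<in> star B u" "f \<in> edges Q" using Qs_star by (auto simp: Qs_def)
      have "aE f = {(u, y), q}" using aE_star[OF u fs(1)] b by (simp add: nE_def)
      then show ?thesis using fs PE by (auto simp: nbrs_def)
    qed
  qed
  have cardP: "card (nbrs P (u, y)) = dH u (Hf u) (Qs u) y" if u: "u \<in> verts B" for u y
  proof -
    have fin1: "finite (nb (Hf u) y)"
    proof -
      have "nb (Hf u) y \<subseteq> nbrs (A u) y" using Hsub[OF u] by (auto simp: nb_def nbrs_def delete_def edges_def)
      then show ?thesis using finite_subset[OF _ finite_subset[OF nbrs_sub[OF sA[OF u]] finA[OF u]]] by blast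
    qed
    have c1: "card (Pair u ` nb (Hf u) y) = card (nb (Hf u) y)" by (simp add: card_image inj_on_def)
    have c2: "card ((\<lambda>f. mE u f) ` {f \<in> Qs u. phi u f = y}) = (if y \<in> phi u ` Qs u then 1 else 0)"
    proof (cases "y \<in> phi u ` Qs u")
      case True
      then obtain f where f: "f \<in> Qs u" "y = phi u f" by blast
      have "{f \<in> Qs u. phi u f = y} = {f}" using f phi_inj[OF u] Qs_star by blast
      then show ?thesis using True by simp
    next
      case False
      then have e: "{f \<in> Qs u. phi u f = y} = {}" by blast
      show ?thesis using False unfolding e by simp
    qed
    have disj: "Pair u ` nb (Hf u) y \<inter> (\<lambda>f. mE u f) ` {f \<in> Qs u. phi u f = y} = {}"
    proof (rule ccontr)
      assume "Pair u ` nb (Hf u) y \<inter> (\<lambda>f. mE u f) ` {f \<in> Qs u. phi u f = y} \<noteq> {}"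
      then obtain t f where "(u, t) = mE u f" "f \<in> Qs u" by blast
      then show False using fst_mE[OF u, of f] Qs_star[of u] by (metis fst_conv subsetD)
    qed
    have fin2: "finite ((\<lambda>f. mE u f) ` {f \<in> Qs u. phi u f = y})"
      using finite_subset[OF Qs_star finite_star] by simp
    show ?thesis unfolding nbP[OF u] using card_Un_disjoint[OF _ fin2 disj] fin1 c1 c2
      by (simp add: dH_def)
  qed
  have lfP: "lambda_factor G P"
    unfolding lf_iff[OF graphG]
  proof (intro conjI)
    show "verts P = verts G" by (rule PV)
    show "edges P \<subseteq> edges G"
    proof
      fix e assume "e \<in> edges P"
      then consider (e1) u e' where "u \<in> verts B" "e' \<in> Hf u" "e = Pair u ` e'"
        | (e2) f where "f \<in> edges Q" "e = aE f" using PE by (auto simp: E1_def)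
      then show "e \<in> edges G"
      proof cases
        case e1
        obtain p1 p2 where "e' = {p1, p2}" "{p1, p2} \<in> edges (A u)" "p1 \<noteq> a u" "p2 \<noteq> a u"
          using Hedge[OF e1(1,2)] by blast
        then show ?thesis unfolding edgesG using e1 by (intro disjI1 exI[of _ u] exI[of _ p1] exI[of _ p2]) auto
      next
        case e2
        then show ?thesis unfolding edgesG using Qp(2) by blast
      qed
    qed
    show "loc P" unfolding loc_def
    proof (intro conjI ballI allI impI)
      fix p assume "p \<in> verts P"
      then have p: "fst p \<in> verts B" "snd p \<in> verts (A (fst p)) - {a (fst p)}" using PV vertsG by auto
      have "p = (fst p, snd p)" by simp
      then show "card (nbrs P p) = 1 \<or> card (nbrs P p) = 2"
        using cardP[OF p(1), of "snd p"] Hf[OF p(1)] p(2) unfolding Hok_def by metis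
    next
      fix p q assume e: "{p, q} \<in> edges P"
      then consider (e1) u e' where "u \<in> verts B" "e' \<in> Hf u" "{p, q} = Pair u ` e'"
        | (e2) f where "f \<in> edges Q" "{p, q} = aE f" using PE by (auto simp: E1_def)
      then show "(card (nbrs P p) = 2) = (card (nbrs P q) \<noteq> 2)"
      proof cases
        case e1
        have "fst ` {p, q} = fst ` Pair u ` e'" using e1(3) by simp
        moreover have "e' \<noteq> {}" using Hedge[OF e1(1,2)] by auto
        ultimately have "fst ` {p, q} = {u}" by (auto simp: image_image)
        then have fp: "fst p = u" "fst q = u" by auto
        have "snd ` {p, q} = snd ` Pair u ` e'" using e1(3) by simp
        then have ee: "e' = {snd p, snd q}" by (simp add: image_image)
        have "(dH u (Hf u) (Qs u) (snd p) = 2) = (dH u (Hf u) (Qs u) (snd q) \<noteq> 2)"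
          using Hf[OF e1(1)] e1(2) ee unfolding Hok_def by blast
        moreover have "p = (u, snd p)" "q = (u, snd q)" using fp by (cases p, cases q, simp)+
        ultimately show ?thesis using cardP[OF e1(1)] by metis
      next
        case e2
        obtain u v where uv: "u \<noteq> v" "u \<in> verts Q" "v \<in> verts Q" "f = {u, v}"
          using sgraph_edgeE[OF Qp(4) e2(1)] by metis
        have uB: "u \<in> verts B" "v \<in> verts B" using uv Qp(1) by auto
        have fQ: "f \<in> Qs u" "f \<in> Qs v" using uv e2(1) by (auto simp: Qs_def)
        have pq: "{p, q} = {(u, phi u f), (v, phi v f)}" using e2(2) uv by (simp add: aE_def)
        have du: "(dH u (Hf u) (Qs u) (phi u f) = 2) = (card (Qs u) = 2)"
          using Hf[OF uB(1)] fQ(1) unfolding Hok_def by blast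
        have dv: "(dH v (Hf v) (Qs v) (phi v f) = 2) = (card (Qs v) = 2)"
          using Hf[OF uB(2)] fQ(2) unfolding Hok_def by blast
        have lq: "(card (Qs u) = 2) = (card (Qs v) \<noteq> 2)"
          using locE'[OF Qp(3)] e2(1) uv cQs by metis
        have X: "(card (nbrs P (u, phi u f)) = 2) = (card (nbrs P (v, phi v f)) \<noteq> 2)"
          using du dv lq cardP[OF uB(1)] cardP[OF uB(2)] by simp
        have "(p = (u, phi u f) \<and> q = (v, phi v f)) \<or> (p = (v, phi v f) \<and> q = (u, phi u f))"
          using pq by (simp add: doubleton_eq_iff)
        then show ?thesis using X by auto
      qed
    qed
  qed
  interpret L: lfP B A a phi P
    by unfold_locales (rule lfP)
  have "Fvec B A a phi P = difactor Q"
  proof (rule set_eqI)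
    fix x
    obtain u v :: 'b where x: "x = (u, v)" by (cases x)
    have key: "card (verts (component P (u, phi u {u, v})) \<inter> C u) = 1 \<longleftrightarrow> card (Qs v) = 2"
      if e: "{u, v} \<in> edges Q" for u v
    proof -
      have uv: "u \<noteq> v" "u \<in> verts B" "v \<in> verts B" using sgraph_edge[OF Qp(4) e] Qp(1) by auto
      have fs: "{u, v} \<in> star B u" using e Qp(2) by (auto simp: star_def)
      have fK: "{u, v} \<in> L.Kp u" using fs e PE by (simp add: L.Kp_def)
      have fQ: "{u, v} \<in> Qs u" "{u, v} \<in> Qs v" using e by (auto simp: Qs_def)
      have "card (verts (component P (u, phi u {u, v})) \<inter> C u) = 1 \<longleftrightarrow> card (nbrs P (nE u {u, v})) = 1"
        using L.compC[OF uv(2) fK] by (simp add: nE_def)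
      also have "\<dots> \<longleftrightarrow> dH u (Hf u) (Qs u) (phi u {u, v}) = 1" using cardP[OF uv(2)] by (simp add: nE_def)
      also have "\<dots> \<longleftrightarrow> card (Qs u) \<noteq> 2"
      proof -
        have "phi u {u, v} \<in> verts (A u) - {a u}" using phi_in[OF uv(2) fs] by simp
        then have "dH u (Hf u) (Qs u) (phi u {u, v}) = 1 \<or> dH u (Hf u) (Qs u) (phi u {u, v}) = 2"
          using Hf[OF uv(2)] unfolding Hok_def by blast
        moreover have "(dH u (Hf u) (Qs u) (phi u {u, v}) = 2) = (card (Qs u) = 2)"
          using Hf[OF uv(2)] fQ(1) unfolding Hok_def by blast
        ultimately show ?thesis by auto
      qed
      also have "\<dots> \<longleftrightarrow> card (Qs v) = 2" using locE'[OF Qp(3) e] cQs by simp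
      finally show ?thesis .
    qed
    have "(u, v) \<in> Fvec B A a phi P \<longleftrightarrow> (u, v) \<in> difactor Q"
    proof
      assume F: "(u, v) \<in> Fvec B A a phi P"
      then have h: "{u, v} \<in> edges B" "aE {u, v} \<in> edges P"
        "card (verts (component P (u, phi u {u, v})) \<inter> C u) = 1"
        by (auto simp: Fvec_def alpha_eq)
      have uv: "u \<noteq> v" using sgraph_edge[OF sB h(1)] by simp
      have "{u, v} \<in> edges Q"
      proof -
        consider (e1) w e' where "w \<in> verts B" "e' \<in> Hf w" "aE {u, v} = Pair w ` e'"
          | (e2) g where "g \<in> edges Q" "aE {u, v} = aE g" using h(2) PE by (auto simp: E1_def)
        then show ?thesis
        proof cases
          case e1
          have "{u, v} = fst ` aE {u, v}" by (simp add: fst_aE)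
          also have "\<dots> \<subseteq> {w}" using e1(3) by auto
          finally show ?thesis using uv by auto
        next
          case e2
          then have "{u, v} = g" using fst_aE by metis
          then show ?thesis using e2 by simp
        qed
      qed
      then show "(u, v) \<in> difactor Q"
        using key h(3) cQs degree_nbrs[OF Qp(4)] by (simp add: difactor_def)
    next
      assume "(u, v) \<in> difactor Q"
      then have h: "{u, v} \<in> edges Q" "degree Q v = 2" by (auto simp: difactor_def)
      have "card (Qs v) = 2" using h(2) cQs degree_nbrs[OF Qp(4)] by simp
      then have "card (verts (component P (u, phi u {u, v})) \<inter> C u) = 1" using key[OF h(1)] by simp
      moreover have "{u, v} \<in> edges B" using h(1) Qp(2) by blast
      moreover have "aE {u, v} \<in> edges P" using h(1) PE by simp
      ultimately show "(u, v) \<in> Fvec B A a phi P" by (simp add: Fvec_def alpha_eq)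
    qed
    then show "x \<in> Fvec B A a phi P \<longleftrightarrow> x \<in> difactor Q" using x by simp
  qed
  then show ?thesis using lfP by blast
qed

end

context setting
begin

definition Xu :: "('b \<times> 'a) set \<Rightarrow> 'b \<Rightarrow> 'a set" where "Xu X u = {y. (u, y) \<in> X}"
definition Kint :: "('b \<times> 'a) set \<Rightarrow> 'b \<Rightarrow> ('b \<times> 'a) set set" where
  "Kint X u = {e \<in> cut G X. fst ` e = {u}}"

lemma Xu_sub: "X \<subseteq> verts G \<Longrightarrow> Xu X u \<subseteq> verts (A u) - {a u}"
  unfolding Xu_def using vertsG by force

lemma gAu: "u \<in> verts B \<Longrightarrow> cubic (A u)" "u \<in> verts B \<Longrightarrow> three_connected (A u)"
  using A by auto

lemma finEA: "u \<in> verts B \<Longrightarrow> finite (edges (A u))"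
  using finite_edges[OF gA] .

lemma starA3: "u \<in> verts B \<Longrightarrow> card (star (A u) (a u)) = 3"
  using A aA by (simp add: cubic_def degree_def star_def)

lemma KA:
  assumes u: "u \<in> verts B" and X: "X \<subseteq> verts G"
  shows "Kint X u = (\<lambda>e. Pair u ` e) ` (cut (A u) (Xu X u) - star (A u) (a u))"
proof (rule set_eqI, rule iffI)
  fix e assume e: "e \<in> Kint X u"
  then have eK: "e \<in> cut G X" and fe: "fst ` e = {u}" by (auto simp: Kint_def)
  have eG: "e \<in> edges G" using eK cut_sub by blast
  obtain p q where pq: "e = {p, q}" using sgraph_edgeE[OF sG eG] by metis
  have fpq: "fst p = u" "fst q = u" using fe pq by auto
  define y z where "y = snd p" and "z = snd q"
  have pq2: "p = (u, y)" "q = (u, z)" using fpq y_def z_def by (cases p, cases q, simp)+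
  have es: "{(u, y), (u, z)} \<in> edges G" using eG pq pq2 by simp
  then have yz: "{y, z} \<in> edges (A u)" "y \<noteq> a u" "z \<noteq> a u" using edge_same by blast+
  have "(p \<in> X) = (q \<notin> X)" using cut_mem[OF sG eG[unfolded pq]] eK pq by simp
  then have "(y \<in> Xu X u) = (z \<notin> Xu X u)" using pq2 by (simp add: Xu_def)
  then have "{y, z} \<in> cut (A u) (Xu X u)" using cut_mem[OF sA[OF u] yz(1)] by simp
  moreover have "{y, z} \<notin> star (A u) (a u)" using yz by (simp add: star_def)
  moreover have "e = Pair u ` {y, z}" using pq pq2 by simp
  ultimately show "e \<in> (\<lambda>e. Pair u ` e) ` (cut (A u) (Xu X u) - star (A u) (a u))" by blast
next
  fix e assume "e \<in> (\<lambda>e. Pair u ` e) ` (cut (A u) (Xu X u) - star (A u) (a u))"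
  then obtain e' where e': "e' \<in> cut (A u) (Xu X u)" "e' \<notin> star (A u) (a u)" "e = Pair u ` e'" by blast
  have eA: "e' \<in> edges (A u)" using e'(1) cut_sub by blast
  obtain y z where yz: "e' = {y, z}" using sgraph_edgeE[OF sA[OF u] eA] by metis
  have ya: "y \<noteq> a u" "z \<noteq> a u" using e'(2) eA yz by (auto simp: star_def)
  have eG: "{(u, y), (u, z)} \<in> edges G"
    unfolding edgesG using u eA yz ya by (intro disjI1 exI[of _ u] exI[of _ y] exI[of _ z]) auto
  have "(y \<in> Xu X u) = (z \<notin> Xu X u)" using cut_mem[OF sA[OF u]] eA yz e'(1) by simp
  then have "((u, y) \<in> X) = ((u, z) \<notin> X)" by (simp add: Xu_def)
  then have "{(u, y), (u, z)} \<in> cut G X" using cut_mem[OF sG eG] by simp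
  moreover have "e = {(u, y), (u, z)}" using e'(3) yz by simp
  ultimately show "e \<in> Kint X u" by (simp add: Kint_def)
qed

lemma card_KA:
  assumes u: "u \<in> verts B" and X: "X \<subseteq> verts G"
  shows "card (Kint X u) = card (cut (A u) (Xu X u) - star (A u) (a u))"
proof -
  have "inj_on (\<lambda>e. Pair u ` e) (cut (A u) (Xu X u) - star (A u) (a u))"
    by (rule inj_onI) (simp add: inj_image_eq_iff inj_on_def)
  then show ?thesis using KA[OF assms] by (simp add: card_image)
qed

lemma c2:
  assumes u: "u \<in> verts B" and X: "X \<subseteq> verts G"
    and sp: "Xu X u \<noteq> {}" "Xu X u \<noteq> verts (A u) - {a u}"
  shows "card (Kint X u) \<ge> 2"
proof -
  have sub: "Xu X u \<subseteq> verts (A u) - {a u}" by (rule Xu_sub[OF X])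
  have na: "a u \<notin> Xu X u" using sub by blast
  have T: "card (cut (A u) (Xu X u)) + card (cut (A u) (insert (a u) (Xu X u)))
      = 2 * card (cut (A u) (Xu X u) - star (A u) (a u)) + 3"
    by (rule cut_toggle[OF sA[OF u] finEA[OF u] na starA3[OF u]])
  have "card (cut (A u) (Xu X u)) \<ge> 3"
    using conn3[OF gAu[OF u]] sub sp(1) aA[OF u] by blast
  moreover have "card (cut (A u) (insert (a u) (Xu X u))) \<ge> 3"
  proof (rule conn3[OF gAu[OF u]])
    show "insert (a u) (Xu X u) \<subseteq> verts (A u)" using sub aA[OF u] by blast
    show "insert (a u) (Xu X u) \<noteq> {}" by simp
    show "insert (a u) (Xu X u) \<noteq> verts (A u)"
    proof
      assume "insert (a u) (Xu X u) = verts (A u)"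
      then have "Xu X u = verts (A u) - {a u}" using na by blast
      then show False using sp(2) by simp
    qed
  qed
  ultimately have "card (cut (A u) (Xu X u) - star (A u) (a u)) \<ge> 2" using T by linarith
  then show ?thesis using card_KA[OF u X] by simp
qed

lemma Kint_disj: "u \<noteq> v \<Longrightarrow> Kint X u \<inter> Kint X v = {}"
  by (auto simp: Kint_def)

lemma aE_inj_B: "f \<in> edges B \<Longrightarrow> g \<in> edges B \<Longrightarrow> aE f = aE g \<Longrightarrow> f = g"
  using fst_aE by metis

lemma aE_edgeB: "f \<in> edges B \<Longrightarrow> aE f \<in> edges G"
  unfolding edgesG by blast

lemma aE_pair: "f = {v, w} \<Longrightarrow> aE f = {(v, phi v f), (w, phi w f)}"
  by (simp add: aE_def)

lemma aE_cross:
  assumes f: "f \<in> edges B" "f = {v, w}"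
  shows "aE f \<in> cut G X \<longleftrightarrow> (((v, phi v f) \<in> X) = ((w, phi w f) \<notin> X))"
proof -
  have "{(v, phi v f), (w, phi w f)} \<in> edges G" using aE_edgeB[OF f(1)] aE_pair[OF f(2)] by simp
  then show ?thesis using cut_mem[OF sG] aE_pair[OF f(2)] by simp
qed

lemma fst_aE_ne: "f \<in> edges B \<Longrightarrow> fst ` aE f \<noteq> {u}"
proof
  assume "f \<in> edges B" "fst ` aE f = {u}"
  then have "f = {u}" using fst_aE by simp
  then show False using sgraph_edgeE[OF sB \<open>f \<in> edges B\<close>] by (metis doubleton_eq_iff insert_absorb2)
qed

lemma cutG_cases:
  assumes "e \<in> cut G X"
  obtains (int) u where "u \<in> verts B" "e \<in> Kint X u" | (alpha) f where "f \<in> edges B" "e = aE f"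
proof -
  have eG: "e \<in> edges G" using assms cut_sub by blast
  then show ?thesis
  proof (cases rule: edge_cases)
    case (i u x y)
    then have "fst ` e = {u}" by auto
    then show ?thesis using that(1)[of u] i(1) assms by (simp add: Kint_def)
  next
    case (ii f)
    then show ?thesis using that(2) by blast
  qed
qed


lemma localcase:
  assumes u: "u \<in> verts B" and XC: "X \<subseteq> C u"
    and sp: "Xu X u \<noteq> {}" "Xu X u \<noteq> verts (A u) - {a u}"
    and m: "matching (cut G X)" and c3: "card (cut G X) = 3"
    and noA: "\<not> (\<exists>K. three_blockade (A u) K)"
  shows False
proof -
  have X: "X \<subseteq> verts G" using XC u by (auto simp: vertsG inC)
  define Y where "Y = Xu X u"
  have Ysub: "Y \<subseteq> verts (A u) - {a u}" using Xu_sub[OF X] Y_def by simp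
  have Xeq: "p \<in> X \<longleftrightarrow> fst p = u \<and> snd p \<in> Y" for p
    using XC by (cases p) (auto simp: Y_def Xu_def inC)
  define Nx where "Nx = {f \<in> star B u. phi u f \<in> Y}"
  have finK: "finite (cut G X)" using finite_subset[OF cut_sub finite_edges[OF graphG]] .
  have Keq: "cut G X = Kint X u \<union> aE ` Nx"
  proof (rule set_eqI, rule iffI)
    fix e assume e: "e \<in> cut G X"
    then show "e \<in> Kint X u \<union> aE ` Nx"
    proof (cases rule: cutG_cases)
      case (int v)
      then have ev: "fst ` e = {v}" by (simp add: Kint_def)
      have eG: "e \<in> edges G" using e cut_sub by blast
      obtain p q where pq: "e = {p, q}" using sgraph_edgeE[OF sG eG] by metis
      have "(p \<in> X) = (q \<notin> X)" using cut_mem[OF sG eG[unfolded pq]] e pq by simp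
      then have "fst p = u \<or> fst q = u" using Xeq by blast
      moreover have "fst p = v" "fst q = v" using ev pq by auto
      ultimately have "v = u" by auto
      then show ?thesis using int by simp
    next
      case (alpha f)
      obtain v w where vw: "v \<noteq> w" "f = {v, w}" using sgraph_edgeE[OF sB alpha(1)] by metis
      have cr: "((v, phi v f) \<in> X) = ((w, phi w f) \<notin> X)" using aE_cross[OF alpha(1) vw(2)] e alpha(2) by simp
      show ?thesis
      proof (cases "(v, phi v f) \<in> X")
        case True
        then have "v = u" "phi u f \<in> Y" using Xeq by auto
        then have "f \<in> Nx" using alpha(1) vw by (auto simp: Nx_def star_def)
        then show ?thesis using alpha(2) by simp
      next
        case False
        then have "(w, phi w f) \<in> X" using cr by simp
        then have "w = u" "phi u f \<in> Y" using Xeq by auto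
        then have "f \<in> Nx" using alpha(1) vw by (auto simp: Nx_def star_def)
        then show ?thesis using alpha(2) by simp
      qed
    qed
  next
    fix e assume "e \<in> Kint X u \<union> aE ` Nx"
    then show "e \<in> cut G X"
    proof
      assume "e \<in> Kint X u" then show ?thesis by (simp add: Kint_def)
    next
      assume "e \<in> aE ` Nx"
      then obtain f where f: "f \<in> Nx" "e = aE f" by blast
      have fs: "f \<in> star B u" "phi u f \<in> Y" using f by (auto simp: Nx_def)
      have o: "f = {u, oth u f}" "oth u f \<noteq> u" "f \<in> edges B" using star_B[OF u fs(1)] by auto
      have "(u, phi u f) \<in> X" using fs Xeq by simp
      moreover have "(oth u f, phi (oth u f) f) \<notin> X" using o Xeq by simp
      ultimately show ?thesis using aE_cross[OF o(3) o(1)] f by simp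
    qed
  qed
  have disj: "Kint X u \<inter> aE ` Nx = {}"
  proof (rule ccontr)
    assume "Kint X u \<inter> aE ` Nx \<noteq> {}"
    then obtain f where f: "f \<in> Nx" "aE f \<in> Kint X u" by blast
    then have "fst ` aE f = {u}" "f \<in> edges B" by (auto simp: Kint_def Nx_def star_def)
    then show False using fst_aE_ne by blast
  qed
  have injN: "inj_on aE Nx"
  proof (rule inj_onI)
    fix f g assume "f \<in> Nx" "g \<in> Nx" "aE f = aE g"
    then show "f = g" using aE_inj_B by (auto simp: Nx_def star_def)
  qed
  have finN: "finite Nx" using finite_subset[OF _ finite_star[of u]] by (auto simp: Nx_def)
  have finKi: "finite (Kint X u)" using finK Keq by simp
  have cK: "card (cut G X) = card (Kint X u) + card Nx"
    using Keq card_Un_disjoint[OF finKi _ disj] finN card_image[OF injN] by simp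
  have ki2: "card (Kint X u) \<ge> 2" using c2[OF u X] sp by simp
  then have nx1: "card Nx \<le> 1" using cK c3 by simp
  define CA where "CA = cut (A u) Y"
  have sa: "sgraph (A u)" by (rule sA[OF u])
  have starpart: "CA \<inter> star (A u) (a u) = (\<lambda>f. {a u, phi u f}) ` Nx"
  proof (rule set_eqI, rule iffI)
    fix e assume e: "e \<in> CA \<inter> star (A u) (a u)"
    then have eA: "e \<in> edges (A u)" "a u \<in> e" by (auto simp: star_def)
    obtain p q where pq: "e = {p, q}" using sgraph_edgeE[OF sa eA(1)] by metis
    define z where "z = (if p = a u then q else p)"
    have ez: "e = {a u, z}" using pq eA(2) z_def by auto
    have "z \<in> nbrs (A u) (a u)" using eA(1) ez by (simp add: nbrs_def)
    then obtain f where f: "f \<in> star B u" "z = phi u f" using N_img[OF u] by blast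
    have "(a u \<in> Y) = (z \<notin> Y)" using cut_mem[OF sa] eA(1) ez e by (simp add: CA_def)
    then have "z \<in> Y" using Ysub by blast
    then have "f \<in> Nx" using f by (simp add: Nx_def)
    then show "e \<in> (\<lambda>f. {a u, phi u f}) ` Nx" using ez f by blast
  next
    fix e assume "e \<in> (\<lambda>f. {a u, phi u f}) ` Nx"
    then obtain f where f: "f \<in> Nx" "e = {a u, phi u f}" by blast
    have fs: "f \<in> star B u" "phi u f \<in> Y" using f by (auto simp: Nx_def)
    have "phi u f \<in> nbrs (A u) (a u)" using phi_in[OF u fs(1)] by simp
    then have eA: "e \<in> edges (A u)" using f by (simp add: nbrs_def)
    have "a u \<notin> Y" using Ysub by blast
    then have "e \<in> CA" using cut_mem[OF sa] eA f fs by (simp add: CA_def)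
    then show "e \<in> CA \<inter> star (A u) (a u)" using eA f by (simp add: star_def)
  qed
  have injS: "inj_on (\<lambda>f. {a u, phi u f}) Nx"
  proof (rule inj_onI)
    fix f g assume fg: "f \<in> Nx" "g \<in> Nx" "{a u, phi u f} = {a u, phi u g}"
    have fs: "f \<in> star B u" "g \<in> star B u" using fg by (auto simp: Nx_def)
    have "phi u f \<noteq> a u" using phi_in[OF u fs(1)] by simp
    then have "phi u f = phi u g" using fg(3) by (auto simp: doubleton_eq_iff)
    then show "f = g" using phi_inj[OF u fs] by simp
  qed
  have cS: "card (CA \<inter> star (A u) (a u)) = card Nx" using starpart card_image[OF injS] by simp
  have cI: "card (CA - star (A u) (a u)) = card (Kint X u)" using card_KA[OF u X] by (simp add: CA_def Y_def)
  have finCA: "finite CA" using finite_subset[OF cut_sub finEA[OF u]] by (simp add: CA_def)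
  have cCA: "card CA = 3"
    using card_Int_Diff[OF finCA, of "star (A u) (a u)"] cS cI cK c3 by simp
  have KA': "Kint X u = (\<lambda>e. Pair u ` e) ` (CA - star (A u) (a u))" using KA[OF u X] by (simp add: CA_def Y_def)
  have mCA: "matching CA" unfolding matching_def
  proof (intro ballI impI)
    fix e e' assume e: "e \<in> CA" and e': "e' \<in> CA" and ne: "e \<noteq> e'"
    have tag_inj: "Pair u ` e \<noteq> Pair u ` e'" using ne by (simp add: inj_image_eq_iff inj_on_def)
    show "e \<inter> e' = {}"
    proof (cases "e \<in> star (A u) (a u)"; cases "e' \<in> star (A u) (a u)")
      assume "e \<in> star (A u) (a u)" "e' \<in> star (A u) (a u)"
      then have sub: "{e, e'} \<subseteq> CA \<inter> star (A u) (a u)" using e e' by auto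
      have "finite (CA \<inter> star (A u) (a u))" using finCA by simp
      then have "card {e, e'} \<le> card (CA \<inter> star (A u) (a u))" using sub by (rule card_mono)
      then have "card (CA \<inter> star (A u) (a u)) \<ge> 2" using ne by simp
      then show ?thesis using cS nx1 by simp
    next
      assume h: "e \<notin> star (A u) (a u)" "e' \<notin> star (A u) (a u)"
      then have "Pair u ` e \<in> cut G X" "Pair u ` e' \<in> cut G X" using e e' KA' by (auto simp: Kint_def)
      then have "Pair u ` e \<inter> Pair u ` e' = {}" using m tag_inj unfolding matching_def by blast
      then show ?thesis by auto
    next
      assume h: "e \<in> star (A u) (a u)" "e' \<notin> star (A u) (a u)"
      then obtain f where f: "f \<in> Nx" "e = {a u, phi u f}" using starpart e by blast
      have fs: "f \<in> star B u" using f by (simp add: Nx_def)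
      have a': "a u \<notin> e'" using h(2) e' cut_sub[of "A u"] by (auto simp: CA_def star_def)
      have "phi u f \<notin> e'"
      proof
        assume "phi u f \<in> e'"
        then have "nE u f \<in> Pair u ` e'" by (simp add: nE_def)
        moreover have "nE u f \<in> aE f" using aE_star[OF u fs] by simp
        moreover have "Pair u ` e' \<in> cut G X" using e' h(2) KA' by (auto simp: Kint_def)
        moreover have "aE f \<in> cut G X" using f(1) Keq by blast
        moreover have "Pair u ` e' \<noteq> aE f"
        proof
          assume "Pair u ` e' = aE f"
          then have "fst ` aE f = fst ` Pair u ` e'" by simp
          moreover have "e' \<noteq> {}"
          proof -
            have "e' \<in> edges (A u)" using e' cut_sub[of "A u"] by (auto simp: CA_def)
            then obtain p q where "e' = {p, q}" using sgraph_edgeE[OF sa] by metis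
            then show ?thesis by simp
          qed
          ultimately have "fst ` aE f = {u}" by (auto simp: image_image)
          then show False using fst_aE_ne star_B[OF u fs] by blast
        qed
        ultimately show False using m unfolding matching_def by blast
      qed
      then show ?thesis using f a' by auto
    next
      assume h: "e \<notin> star (A u) (a u)" "e' \<in> star (A u) (a u)"
      then obtain f where f: "f \<in> Nx" "e' = {a u, phi u f}" using starpart e' by blast
      have fs: "f \<in> star B u" using f by (simp add: Nx_def)
      have a': "a u \<notin> e" using h(1) e cut_sub[of "A u"] by (auto simp: CA_def star_def)
      have "phi u f \<notin> e"
      proof
        assume "phi u f \<in> e"
        then have "nE u f \<in> Pair u ` e" by (simp add: nE_def)
        moreover have "nE u f \<in> aE f" using aE_star[OF u fs] by simp
        moreover have "Pair u ` e \<in> cut G X" using e h(1) KA' by (auto simp: Kint_def)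
        moreover have "aE f \<in> cut G X" using f(1) Keq by blast
        moreover have "Pair u ` e \<noteq> aE f"
        proof
          assume "Pair u ` e = aE f"
          then have "fst ` aE f = fst ` Pair u ` e" by simp
          moreover have "e \<noteq> {}"
          proof -
            have "e \<in> edges (A u)" using e cut_sub[of "A u"] by (auto simp: CA_def)
            then obtain p q where "e = {p, q}" using sgraph_edgeE[OF sa] by metis
            then show ?thesis by simp
          qed
          ultimately have "fst ` aE f = {u}" by (auto simp: image_image)
          then show False using fst_aE_ne star_B[OF u fs] by blast
        qed
        ultimately show False using m unfolding matching_def by blast
      qed
      then show ?thesis using f a' by auto
    qed
  qed
  have "edge_cut (A u) CA"
    unfolding edge_cut_def
  proof (intro exI[of _ Y] conjI)
    show "Y \<subseteq> verts (A u)" using Ysub by blast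
    show "Y \<noteq> {}" using sp Y_def by simp
    show "Y \<noteq> verts (A u)" using Ysub aA[OF u] by blast
    show "CA = {e \<in> edges (A u). \<exists>x\<in>Y. \<exists>y\<in>verts (A u) - Y. e = {x, y}}" by (simp add: CA_def cut_def)
  qed
  then have "three_blockade (A u) CA" using mCA cCA by (simp add: three_blockade_def)
  then show False using noA by blast
qed

end

context setting
begin

lemma finKG: "finite (cut G X)"
  using finite_subset[OF cut_sub finite_edges[OF graphG]] .

lemma blockade:
  assumes noB: "\<not> (\<exists>K. three_blockade B K)"
    and noA: "\<forall>u\<in>verts B. \<not> (\<exists>K. three_blockade (A u) K)"
    and K: "three_blockade G K"
  shows "\<exists>w\<in>verts B. K = aE ` star B w"
proof -
  have ec: "edge_cut G K" and m: "matching K" and c3: "card K = 3"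
    using K by (auto simp: three_blockade_def)
  obtain X where X: "X \<subseteq> verts G" "X \<noteq> {}" "X \<noteq> verts G" and KX: "K = cut G X"
    using ec unfolding edge_cut_def cut_def by blast
  define split where "split u \<longleftrightarrow> Xu X u \<noteq> {} \<and> Xu X u \<noteq> verts (A u) - {a u}" for u
  have uniq: False if "u \<in> verts B" "v \<in> verts B" "u \<noteq> v" "split u" "split v" for u v
  proof -
    have "card (Kint X u) \<ge> 2" "card (Kint X v) \<ge> 2"
      using c2[OF that(1) X(1)] c2[OF that(2) X(1)] that(4,5) by (auto simp: split_def)
    moreover have "Kint X u \<union> Kint X v \<subseteq> K" using KX by (auto simp: Kint_def)
    moreover have "Kint X u \<inter> Kint X v = {}" using Kint_disj[OF that(3)] .
    moreover have fK: "finite K" using finKG[of X] KX by simp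
    ultimately have "card (Kint X u \<union> Kint X v) = card (Kint X u) + card (Kint X v)"
      using card_Un_disjoint finite_subset by (metis Un_subset_iff)
    moreover have "card (Kint X u \<union> Kint X v) \<le> card K"
      using card_mono[OF fK \<open>Kint X u \<union> Kint X v \<subseteq> K\<close>] .
    ultimately have "card K \<ge> 4" using \<open>card (Kint X u) \<ge> 2\<close> \<open>card (Kint X v) \<ge> 2\<close> by linarith
    then show False using c3 by simp
  qed
  have nsside: "((v, y) \<in> X) \<longleftrightarrow> Xu X v \<noteq> {}"
    if "\<not> split v" "y \<in> verts (A v) - {a v}" for v y
  proof -
    have "Xu X v = {} \<or> Xu X v = verts (A v) - {a v}" using that(1) by (auto simp: split_def)
    then show ?thesis using that(2) by (auto simp: Xu_def)
  qed
  have phiV: "phi v f \<in> verts (A v) - {a v}" if "v \<in> verts B" "f \<in> edges B" "v \<in> f" for v f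
    using phi_in[OF that(1)] that by (simp add: star_def)
  show ?thesis
  proof (cases "\<exists>u\<in>verts B. split u")
    case True
    then obtain u where u: "u \<in> verts B" "split u" by blast
    have others: "\<not> split v" if "v \<in> verts B" "v \<noteq> u" for v using uniq[OF u(1) that(1)] that u(2) by blast
    define Z where "Z = {v \<in> verts B - {u}. Xu X v \<noteq> {}}"
    have side: "((v, y) \<in> X) \<longleftrightarrow> v \<in> Z" if "v \<in> verts B" "v \<noteq> u" "y \<in> verts (A v) - {a v}" for v y
      using nsside[OF others[OF that(1,2)] that(3)] that by (simp add: Z_def)
    have ki: "card (Kint X u) \<ge> 2" using c2[OF u(1) X(1)] u(2) by (simp add: split_def)
    have sub1: "aE ` (cut B Z - star B u) \<subseteq> K - Kint X u"
    proof
      fix e assume "e \<in> aE ` (cut B Z - star B u)"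
      then obtain f where f: "f \<in> cut B Z" "f \<notin> star B u" "e = aE f" by blast
      have fE: "f \<in> edges B" using f(1) cut_sub by blast
      obtain v w where vw: "v \<noteq> w" "v \<in> verts B" "w \<in> verts B" "f = {v, w}" using sgraph_edgeE[OF sB fE] by metis
      have nu: "v \<noteq> u" "w \<noteq> u" using f(2) fE vw by (auto simp: star_def)
      have "(v \<in> Z) = (w \<notin> Z)" using cut_mem[OF sB] fE vw f(1) by simp
      moreover have "((v, phi v f) \<in> X) = (v \<in> Z)" using side[OF vw(2) nu(1) phiV[OF vw(2) fE]] vw by simp
      moreover have "((w, phi w f) \<in> X) = (w \<in> Z)" using side[OF vw(3) nu(2) phiV[OF vw(3) fE]] vw by simp
      ultimately have "aE f \<in> cut G X" using aE_cross[OF fE vw(4)] by simp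
      moreover have "aE f \<notin> Kint X u" using fst_aE_ne[OF fE] by (simp add: Kint_def)
      ultimately show "e \<in> K - Kint X u" using f KX by simp
    qed
    have injA: "inj_on aE (cut B Z - star B u)" using aE_inj_B cut_sub by (fastforce simp: inj_on_def)
    have "card (cut B Z - star B u) \<le> card (K - Kint X u)"
      using card_mono[OF _ sub1] card_image[OF injA] KX finKG by simp
    also have "\<dots> = card K - card (Kint X u)"
      using KX by (simp add: card_Diff_subset finKG finite_subset Kint_def)
    finally have cz: "card (cut B Z - star B u) \<le> 1" using ki c3 by simp
    have uZ: "u \<notin> Z" by (simp add: Z_def)
    have T: "card (cut B Z) + card (cut B (insert u Z)) = 2 * card (cut B Z - star B u) + 3"
      by (rule cut_toggle[OF sB finite_edges[OF gB] uZ card_star[OF u(1)]])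
    have ZV: "Z \<subseteq> verts B" by (auto simp: Z_def)
    have "Z = {} \<or> insert u Z = verts B"
    proof (rule ccontr)
      assume h: "\<not> (Z = {} \<or> insert u Z = verts B)"
      have "card (cut B Z) \<ge> 3"
      proof (rule conn3[OF cB tcB ZV])
        show "Z \<noteq> {}" using h by blast
        show "Z \<noteq> verts B" using uZ u(1) by blast
      qed
      moreover have "card (cut B (insert u Z)) \<ge> 3"
      proof (rule conn3[OF cB tcB])
        show "insert u Z \<subseteq> verts B" using ZV u(1) by blast
        show "insert u Z \<noteq> {}" by simp
        show "insert u Z \<noteq> verts B" using h by blast
      qed
      ultimately show False using T cz by simp
    qed
    then show ?thesis
    proof
      assume Z0: "Z = {}"
      have XC: "X \<subseteq> C u"
      proof
        fix p assume p: "p \<in> X"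
        then have "p \<in> verts G" using X(1) by blast
        then have pv: "fst p \<in> verts B" "snd p \<in> verts (A (fst p)) - {a (fst p)}" using vertsG[of p] by auto
        have "fst p = u"
        proof (rule ccontr)
          assume "fst p \<noteq> u"
          then have "fst p \<in> Z" using side[OF pv(1) _ pv(2)] p by simp
          then show False using Z0 by simp
        qed
        then show "p \<in> C u" using pv by (simp add: inC)
      qed
      have False
        by (rule localcase[OF u(1) XC _ _ m[unfolded KX] c3[unfolded KX]])
           (use u(2) noA u(1) in \<open>auto simp: split_def\<close>)
      then show ?thesis ..
    next
      assume ZV': "insert u Z = verts B"
      define X' where "X' = verts G - X"
      have KX': "K = cut G X'" using KX cut_compl[OF sG] by (simp add: X'_def)
      have XC: "X' \<subseteq> C u"
      proof
        fix p assume p: "p \<in> X'"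
        then have "p \<in> verts G" by (simp add: X'_def)
        then have pv: "fst p \<in> verts B" "snd p \<in> verts (A (fst p)) - {a (fst p)}" using vertsG[of p] by auto
        have "fst p = u"
        proof (rule ccontr)
          assume ne: "fst p \<noteq> u"
          then have "fst p \<in> Z" using ZV' pv(1) by blast
          then have "p \<in> X" using side[OF pv(1) ne pv(2)] by simp
          then show False using p by (simp add: X'_def)
        qed
        then show "p \<in> C u" using pv by (simp add: inC)
      qed
      have Xu': "Xu X' u = (verts (A u) - {a u}) - Xu X u"
        using Xu_sub[OF X(1), of u] u(1) by (auto simp: Xu_def X'_def vertsG)
      have sp': "Xu X' u \<noteq> {}" "Xu X' u \<noteq> verts (A u) - {a u}"
        using u(2) Xu' Xu_sub[OF X(1), of u] by (auto simp: split_def)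
      have False
        by (rule localcase[OF u(1) XC sp' m[unfolded KX'] c3[unfolded KX']]) (use noA u(1) in blast)
      then show ?thesis ..
    qed
  next
    case False
    then have ns: "\<not> split v" if "v \<in> verts B" for v using that by blast
    define U where "U = {v \<in> verts B. Xu X v \<noteq> {}}"
    have side: "((v, y) \<in> X) \<longleftrightarrow> v \<in> U" if "v \<in> verts B" "y \<in> verts (A v) - {a v}" for v y
      using nsside[OF ns[OF that(1)] that(2)] that by (simp add: U_def)
    have UV: "U \<subseteq> verts B" by (auto simp: U_def)
    have Keq: "K = aE ` cut B U"
    proof (rule set_eqI, rule iffI)
      fix e assume e: "e \<in> K"
      then have e': "e \<in> cut G X" using KX by simp
      then show "e \<in> aE ` cut B U"
      proof (cases rule: cutG_cases)
        case (int v)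
        then obtain e' where e'': "e' \<in> cut (A v) (Xu X v)" "e' \<notin> star (A v) (a v)"
          using KA[OF int(1) X(1)] by blast
        have eA: "e' \<in> edges (A v)" using e''(1) cut_sub by blast
        obtain y z where yz: "e' = {y, z}" "y \<in> verts (A v)" "z \<in> verts (A v)"
          using sgraph_edgeE[OF sA[OF int(1)] eA] by metis
        have ya: "y \<noteq> a v" "z \<noteq> a v" using e''(2) eA yz by (auto simp: star_def)
        have "(y \<in> Xu X v) = (z \<notin> Xu X v)" using cut_mem[OF sA[OF int(1)]] eA yz e''(1) by simp
        moreover have "Xu X v = {} \<or> Xu X v = verts (A v) - {a v}" using ns[OF int(1)] by (auto simp: split_def)
        ultimately have False using yz ya by auto
        then show ?thesis ..
      next
        case (alpha f)
        obtain v w where vw: "v \<noteq> w" "v \<in> verts B" "w \<in> verts B" "f = {v, w}"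
          using sgraph_edgeE[OF sB alpha(1)] by metis
        have "((v, phi v f) \<in> X) = ((w, phi w f) \<notin> X)" using aE_cross[OF alpha(1) vw(4)] e' alpha(2) by simp
        moreover have "((v, phi v f) \<in> X) = (v \<in> U)" using side[OF vw(2) phiV[OF vw(2) alpha(1)]] vw by simp
        moreover have "((w, phi w f) \<in> X) = (w \<in> U)" using side[OF vw(3) phiV[OF vw(3) alpha(1)]] vw by simp
        ultimately have "f \<in> cut B U" using cut_mem[OF sB] alpha(1) vw by simp
        then show ?thesis using alpha(2) by blast
      qed
    next
      fix e assume "e \<in> aE ` cut B U"
      then obtain f where f: "f \<in> cut B U" "e = aE f" by blast
      have fE: "f \<in> edges B" using f(1) cut_sub by blast
      obtain v w where vw: "v \<noteq> w" "v \<in> verts B" "w \<in> verts B" "f = {v, w}" using sgraph_edgeE[OF sB fE] by metis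
      have "(v \<in> U) = (w \<notin> U)" using cut_mem[OF sB] fE vw f(1) by simp
      moreover have "((v, phi v f) \<in> X) = (v \<in> U)" using side[OF vw(2) phiV[OF vw(2) fE]] vw by simp
      moreover have "((w, phi w f) \<in> X) = (w \<in> U)" using side[OF vw(3) phiV[OF vw(3) fE]] vw by simp
      ultimately have "aE f \<in> cut G X" using aE_cross[OF fE vw(4)] by simp
      then show "e \<in> K" using f KX by simp
    qed
    have injA: "inj_on aE (cut B U)" using aE_inj_B cut_sub by (fastforce simp: inj_on_def)
    have cU: "card (cut B U) = 3" using Keq c3 card_image[OF injA] by simp
    have finU: "finite (cut B U)" using finite_subset[OF cut_sub finite_edges[OF gB]] .
    have U0: "U \<noteq> {}"
    proof -
      obtain p where p: "p \<in> X" using X(2) by blast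
      then have "p \<in> verts G" using X(1) by blast
      then have pv: "fst p \<in> verts B" "snd p \<in> verts (A (fst p)) - {a (fst p)}" using vertsG[of p] by auto
      have "(fst p, snd p) \<in> X" using p by simp
      then have "fst p \<in> U" using side[OF pv] by simp
      then show ?thesis by blast
    qed
    have UVne: "U \<noteq> verts B"
    proof
      assume UV': "U = verts B"
      obtain p where p: "p \<in> verts G" "p \<notin> X" using X(1,3) by blast
      then have pv: "fst p \<in> verts B" "snd p \<in> verts (A (fst p)) - {a (fst p)}" using vertsG[of p] by auto
      have "(fst p, snd p) \<in> X" using side[OF pv] UV' pv(1) by simp
      then show False using p by simp
    qed
    show ?thesis
    proof (cases "matching (cut B U)")
      case True
      have "edge_cut B (cut B U)" unfolding edge_cut_def cut_def using UV U0 UVne by blast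
      then have "three_blockade B (cut B U)" using True cU by (simp add: three_blockade_def)
      then show ?thesis using noB by blast
    next
      case False
      then obtain e f where ef: "e \<in> cut B U" "f \<in> cut B U" "e \<noteq> f" "e \<inter> f \<noteq> {}"
        unfolding matching_def by blast
      then obtain w where w: "w \<in> e" "w \<in> f" by blast
      have wV: "w \<in> verts B" using ef(1) cut_sub[of B] sgraph_edgeE[OF sB] w(1) by (metis empty_iff insert_iff subsetD)
      have efs: "e \<in> star B w" "f \<in> star B w" using ef w cut_sub[of B] by (auto simp: star_def)
      have "cut B U - star B w \<subseteq> cut B U - {e, f}" using efs by blast
      then have "card (cut B U - star B w) \<le> card (cut B U - {e, f})" using finU by (simp add: card_mono)
      also have "\<dots> = 1" using cU ef finU by (simp add: card_Diff_subset)
      finally have cs: "card (cut B U - star B w) \<le> 1" .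
      show ?thesis
      proof (cases "w \<in> U")
        case True
        define U' where "U' = U - {w}"
        have wU': "w \<notin> U'" and iU: "insert w U' = U" using True by (auto simp: U'_def)
        have T: "card (cut B U') + card (cut B U) = 2 * card (cut B U' - star B w) + 3"
          using cut_toggle[OF sB finite_edges[OF gB] wU' card_star[OF wV]] iU by simp
        have "cut B U - star B w = cut B U' - star B w"
          using cut_toggle_set[OF sB wU'] iU by blast
        then have "card (cut B U') \<le> 2" using T cs cU by simp
        then have "U' = {}" using conn3[OF cB tcB, of U'] UV wU' wV by (auto simp: U'_def)
        then have "U = {w}" using True by (auto simp: U'_def)
        then show ?thesis using Keq cut_single[OF sB] wV by auto
      next
        case False
        have T: "card (cut B U) + card (cut B (insert w U)) = 2 * card (cut B U - star B w) + 3"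
          by (rule cut_toggle[OF sB finite_edges[OF gB] False card_star[OF wV]])
        then have "card (cut B (insert w U)) \<le> 2" using cs cU by simp
        then have iV: "insert w U = verts B" using conn3[OF cB tcB, of "insert w U"] UV wV by auto
        then have "verts B - U = {w}" using False by auto
        then have "cut B U = cut B {w}" using cut_compl[OF sB, of U] by simp
        then show ?thesis using Keq cut_single[OF sB] wV by auto
      qed
    qed
  qed
qed

end

theorem mainTheorem4:
  fixes B :: "'b graph" and A :: "'b \<Rightarrow> 'a graph" and a :: "'b \<Rightarrow> 'a"
    and phi :: "'b \<Rightarrow> 'b set \<Rightarrow> 'a"
  assumes B: "cubic B" "three_connected B"
    and A: "\<And>u. u \<in> verts B \<Longrightarrow> cubic (A u) \<and> three_connected (A u) \<and> a u \<in> verts (A u)"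
    and phi: "\<And>u. u \<in> verts B \<Longrightarrow>
       bij_betw (phi u) {e \<in> edges B. u \<in> e} (nbrs (A u) (a u))"
    and h0: "card (verts B) mod 6 = 0" "\<And>u. u \<in> verts B \<Longrightarrow> card (verts (A u)) mod 6 = 2"
    and h1: "\<And>u x. u \<in> verts B \<Longrightarrow> x \<in> verts (A u) - (nbrs (A u) (a u) \<union> {a u}) \<Longrightarrow>
       (\<exists>y\<in>nbrs (A u) (a u). {x, y} \<in> edges (A u)) \<Longrightarrow>
       \<not> has_lambda_factor (delete (A u) (nbrs (A u) (a u) \<union> {a u, x}))"
    and h2: "\<And>u z. u \<in> verts B \<Longrightarrow> {a u, z} \<in> edges (A u) \<Longrightarrow>
       has_lambda_factor (delete (A u) {a u, z})"
    and h3: "\<And>u w1 w2 w4 w5. u \<in> verts B \<Longrightarrow> distinct [w1, w2, a u, w4, w5] \<Longrightarrow>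
       {w1, w2} \<in> edges (A u) \<Longrightarrow> {w2, a u} \<in> edges (A u) \<Longrightarrow>
       {a u, w4} \<in> edges (A u) \<Longrightarrow> {w4, w5} \<in> edges (A u) \<Longrightarrow>
       has_lambda_factor (delete (A u) {w1, w2, a u, w4, w5})"
  shows
    "(\<forall>P. lambda_factor (compose B A a phi) P \<longrightarrow>
        lambda_factor B (verts B, alpha_preimage B phi P) \<and>
        Fvec B A a phi P = difactor (verts B, alpha_preimage B phi P))
   \<and> (\<forall>P. lambda_factor (compose B A a phi) P \<longrightarrow>
        \<not> (\<exists>K. three_blockade B K) \<longrightarrow>
        (\<forall>u\<in>verts B. \<not> (\<exists>K. three_blockade (A u) K)) \<longrightarrow>
        (\<forall>K. three_blockade (compose B A a phi) K \<longrightarrow> card (K \<inter> edges P) \<in> {1, 2}))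
   \<and> (\<forall>Q. lambda_factor B Q \<longrightarrow>
        (\<exists>P. lambda_factor (compose B A a phi) P \<and> Fvec B A a phi P = difactor Q))"
proof -
  interpret S: setting B A a phi
    by unfold_locales (use B A phi h0 in auto)
  have P1: "lambda_factor B (verts B, alpha_preimage B phi P) \<and>
        Fvec B A a phi P = difactor (verts B, alpha_preimage B phi P)"
    if P: "lambda_factor (compose B A a phi) P" for P
  proof -
    interpret L: lfPh B A a phi P
      by unfold_locales (use P h1 in auto)
    show ?thesis using L.a1_lf L.a1_F by (simp add: L.Q'_def)
  qed
  have P2: "card (K \<inter> edges P) \<in> {1, 2}"
    if P: "lambda_factor (compose B A a phi) P" and nB: "\<not> (\<exists>K. three_blockade B K)"
      and nA: "\<forall>u\<in>verts B. \<not> (\<exists>K. three_blockade (A u) K)"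
      and K: "three_blockade (compose B A a phi) K" for P K
  proof -
    interpret L: lfPh B A a phi P
      by unfold_locales (use P h1 in auto)
    obtain w where w: "w \<in> verts B" "K = S.aE ` star B w" using S.blockade[OF nB nA K] by blast
    show ?thesis using L.star_cut_card[OF w(1)] w(2) by auto
  qed
  have P3: "\<exists>P. lambda_factor (compose B A a phi) P \<and> Fvec B A a phi P = difactor Q"
    if Q: "lambda_factor B Q" for Q
    using S.a3[OF h2 h3 Q] by blast
  show ?thesis using P1 P2 P3 by blast
qed


end
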